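(* Let $\delta_B,\delta_R\ge1$ be integers, let $T_0(\lambda)$ be the matrix defined in the context, and let \[\sigma_1=\{\lambda\in\mathbb C:\ T_0(\lambda)\text{ has an eigenvalue of modulus }(\delta_R\delta_B)^{-1/2}\}\] (which is a subset of $[0,\infty)$). Then the eigenvalues $\mu^\pm(\lambda)$ of $T_0(\lambda)$ may be chosen to be single valued analytic functions on $\mathbb C\setminus\sigma_1$ satisfying, as $\lambda\to-\infty$ along the real axis, \[e^{-2|\operatorname{Im}\sqrt\lambda|}\mu^+(\lambda)\to\frac{\delta_R+1}{2\delta_R}\cdot\frac{\delta_B+1}{2\delta_B},\qquad e^{2|\operatorname{Im}\sqrt\lambda|}\mu^-(\lambda)\to\frac{2}{\delta_R+1}\cdot\frac{2}{\delta_B+1}.\] On $\mathbb C\setminus\sigma_1$ one has $|\mu^+(\lambda)|>1/\sqrt{\delta_R\delta_B}$ and $|\mu^-(\lambda)|<1/\sqrt{\delta_R\delta_B}$. The functions $\mu^+$ and $\mu^-$ have continuous extensions to the real axis from the upper and from the lower half planes, which are analytic except on the discrete set where $(\operatorname{tr}T_0(\lambda))^2=4/(\delta_R\delta_B)$. If $\nu\in\sigma_1$ then \[\lim_{\epsilon\to0^+}\bigl(\mu^\pm(\nu+i\epsilon)-\mu^\pm(\nu-i\epsilon)\bigr)=2i\,\operatorname{Im}(\mu^\pm(\nu)),\] where $\mu^\pm(\nu)$ on the right denotes the boundary value $\lim_{\epsilon\to0^+}\mu^\pm(\nu+i\epsilon)$.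
   Context: With $\omega=\sqrt\lambda$, define the entire functions $c(\lambda)=\cos\omega$, $c'(\lambda)=-\omega\sin\omega$, $s(\lambda)=\sin\omega/\omega$, $s'(\lambda)=\cos\omega$. Let $M_0=\begin{pmatrix}c&s\\c'&s'\end{pmatrix}$, $J_B=\operatorname{diag}(1,1/\delta_B)$, $J_R=\operatorname{diag}(1,1/\delta_R)$, and $T_0(\lambda)=J_RM_0J_BM_0$. Then $\det T_0(\lambda)=1/(\delta_B\delta_R)$ and $\operatorname{tr}T_0(\lambda)=\cos^2\omega(1+\frac1{\delta_B\delta_R})-\sin^2\omega(\frac1{\delta_R}+\frac1{\delta_B})$; the eigenvalues are $\mu^\pm=\frac12\operatorname{tr}T_0\pm\sqrt{\frac14(\operatorname{tr}T_0)^2-\det T_0}$, and $\mu^+\mu^-=1/(\delta_B\delta_R)$. *)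

theory Defs
  imports "HOL-Analysis.Analysis"
begin

text \<open>Entire functions c, c', s, s' of lambda (omega = sqrt lambda; they do not
  depend on the choice of the square root branch).\<close>
definition cfun :: "complex \<Rightarrow> complex" where
  "cfun l = cos (csqrt l)"
definition cfun' :: "complex \<Rightarrow> complex" where
  "cfun' l = - csqrt l * sin (csqrt l)"
definition sfun :: "complex \<Rightarrow> complex" where
  "sfun l = (if l = 0 then 1 else sin (csqrt l) / csqrt l)"
definition sfun' :: "complex \<Rightarrow> complex" where
  "sfun' l = cos (csqrt l)"

definition M0 :: "complex \<Rightarrow> complex^2^2" where
  "M0 l = vector [vector [cfun l, sfun l], vector [cfun' l, sfun' l]]"

definition Jmat :: "nat \<Rightarrow> complex^2^2" where
  "Jmat d = vector [vector [1, 0], vector [0, 1 / of_nat d]]"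

definition T0 :: "nat \<Rightarrow> nat \<Rightarrow> complex \<Rightarrow> complex^2^2" where
  "T0 dB dR l = Jmat dR ** M0 l ** Jmat dB ** M0 l"

definition is_eigenvalue :: "complex^2^2 \<Rightarrow> complex \<Rightarrow> bool" where
  "is_eigenvalue A m \<longleftrightarrow> (\<exists>v. v \<noteq> 0 \<and> A *v v = m *s v)"

definition sigma1 :: "nat \<Rightarrow> nat \<Rightarrow> complex set" where
  "sigma1 dB dR = {l. \<exists>m. is_eigenvalue (T0 dB dR l) m \<and> cmod m = 1 / sqrt (real (dR * dB))}"

definition real_analytic_at :: "(real \<Rightarrow> complex) \<Rightarrow> real \<Rightarrow> bool" where
  "real_analytic_at f x0 \<longleftrightarrow> (\<exists>r>0. \<exists>a::nat \<Rightarrow> complex.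
      \<forall>x. \<bar>x - x0\<bar> < r \<longrightarrow> (\<lambda>n. a n * of_real (x - x0) ^ n) sums f x)"

end

theory Submission
  imports Defs "HOL-Complex_Analysis.Complex_Analysis" "HOL-Real_Asymp.Real_Asymp"
begin

lemma vec2_eq: "(v::complex^2) = w \<longleftrightarrow> v$1 = w$1 \<and> v$2 = w$2"
  by (simp add: vec_eq_iff forall_2)

lemma eig2_iff:
  fixes A :: "complex^2^2"
  shows "is_eigenvalue A m \<longleftrightarrow> m^2 - trace A * m + det A = 0"
proof -
  let ?a = "A$1$1 - m" and ?b = "A$1$2" and ?c = "A$2$1" and ?d = "A$2$2 - m"
  have key: "m^2 - trace A * m + det A = ?a * ?d - ?b * ?c"
    by (simp add: trace_def sum_2 det_2 algebra_simps power2_eq_square)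
  have ev: "A *v v = m *s v \<longleftrightarrow> ?a * v$1 + ?b * v$2 = 0 \<and> ?c * v$1 + ?d * v$2 = 0" for v
    by (simp add: vec2_eq matrix_vector_mult_def sum_2 algebra_simps)
  show ?thesis
  proof
    assume "is_eigenvalue A m"
    then obtain v where v: "v \<noteq> 0" "A *v v = m *s v" by (auto simp: is_eigenvalue_def)
    then have e1: "?a * v$1 + ?b * v$2 = 0" and e2: "?c * v$1 + ?d * v$2 = 0" using ev by auto
    have "v$1 \<noteq> 0 \<or> v$2 \<noteq> 0" using v(1) by (auto simp: vec2_eq)
    then have "?a * ?d - ?b * ?c = 0"
    proof
      assume h: "v$1 \<noteq> 0"
      have "(?a * ?d - ?b * ?c) * v$1 = ?d * (?a * v$1 + ?b * v$2) - ?b * (?c * v$1 + ?d * v$2)"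
        by (simp add: algebra_simps)
      then show ?thesis using e1 e2 h by simp
    next
      assume h: "v$2 \<noteq> 0"
      have "(?a * ?d - ?b * ?c) * v$2 = ?a * (?c * v$1 + ?d * v$2) - ?c * (?a * v$1 + ?b * v$2)"
        by (simp add: algebra_simps)
      then show ?thesis using e1 e2 h by simp
    qed
    then show "m^2 - trace A * m + det A = 0" using key by simp
  next
    assume "m^2 - trace A * m + det A = 0"
    then have z: "?a * ?d - ?b * ?c = 0" using key by simp
    show "is_eigenvalue A m"
    proof (cases "?a = 0 \<and> ?b = 0")
      case True
      show ?thesis
      proof (cases "?c = 0 \<and> ?d = 0")
        case True2: True
        have "A *v vector [1,0] = m *s vector [1,0]"
          using True True2 by (subst ev) simp
        moreover have "(vector [1,0] :: complex^2) \<noteq> 0" by (simp add: vec2_eq vector_2)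
        ultimately show ?thesis unfolding is_eigenvalue_def by blast
      next
        case False
        have "A *v vector [?d, - ?c] = m *s vector [?d, - ?c]"
          using True z by (subst ev) (simp add: algebra_simps)
        moreover have "(vector [?d, - ?c] :: complex^2) \<noteq> 0" using False by (auto simp add: vec2_eq vector_2)
        ultimately show ?thesis unfolding is_eigenvalue_def by blast
      qed
    next
      case False
      have "A *v vector [?b, - ?a] = m *s vector [?b, - ?a]"
        using z by (subst ev) (simp add: algebra_simps)
      moreover have "(vector [?b, - ?a] :: complex^2) \<noteq> 0" using False by (auto simp add: vec2_eq vector_2)
      ultimately show ?thesis unfolding is_eigenvalue_def by blast
    qed
  qed
qed

definition EE :: "complex \<Rightarrow> complex" where "EE z = cos (2 * csqrt z)"
definition DD :: "nat \<Rightarrow> nat \<Rightarrow> real" where "DD dB dR = 1 / (real dR * real dB)"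
definition aa :: "nat \<Rightarrow> nat \<Rightarrow> real" where "aa dB dR = 1 / real dR + 1 / real dB"
definition AA :: "nat \<Rightarrow> nat \<Rightarrow> real" where "AA dB dR = (1 + DD dB dR - aa dB dR) / 2"
definition BB :: "nat \<Rightarrow> nat \<Rightarrow> real" where "BB dB dR = (1 + DD dB dR + aa dB dR) / 2"

lemma sfun_cfun': "sfun l * cfun' l = - ((sin (csqrt l)) ^ 2)"
  by (cases "l = 0") (auto simp: sfun_def cfun'_def power2_eq_square)

lemma det_M0: "det (M0 l) = 1"
proof -
  have "det (M0 l) = cfun l * sfun' l - sfun l * cfun' l"
    by (simp add: M0_def det_2)
  also have "\<dots> = 1" by (simp add: sfun_cfun' cfun_def sfun'_def power2_eq_square[symmetric] sin_squared_eq)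
  finally show ?thesis .
qed

lemma det_T0: "det (T0 dB dR l) = of_real (DD dB dR)"
  unfolding T0_def by (simp only: det_mul det_M0) (simp add: det_2 Jmat_def DD_def)

lemma trace_T0:
  assumes "dB \<ge> 1" "dR \<ge> 1"
  shows "trace (T0 dB dR l) = of_real (AA dB dR) + of_real (BB dB dR) * EE l"
proof -
  have t: "trace (T0 dB dR l) = (cfun l) ^ 2 + sfun l * cfun' l / of_nat dB
       + (cfun' l * sfun l + (sfun' l) ^ 2 / of_nat dB) / of_nat dR"
    by (simp add: T0_def Jmat_def M0_def trace_def sum_2 matrix_matrix_mult_def power2_eq_square
        algebra_simps add_divide_distrib)
  have c2: "cos (csqrt l) ^ 2 = (1 + EE l) / 2" and s2: "sin (csqrt l) ^ 2 = (1 - EE l)/2"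
    by (simp_all add: EE_def cos_double_cos cos_double_sin sin_squared_eq)
  have nz: "(of_nat dB :: complex) \<noteq> 0" "(of_nat dR :: complex) \<noteq> 0" using assms by auto
  show ?thesis unfolding t sfun_cfun' mult.commute[of "cfun' l"] cfun_def sfun'_def c2 s2 AA_def BB_def DD_def aa_def
    using nz by (simp add: field_simps)
qed

lemma cos_eq_of_sq_eq: "(x::complex)^2 = y^2 \<Longrightarrow> cos x = cos y"
  by (metis cos_minus power2_eq_iff)

lemma EE_alt: "EE z = cos (2 * \<i> * csqrt (-z))"
  unfolding EE_def by (rule cos_eq_of_sq_eq) (simp add: power_mult_distrib)

lemma EE_alt_fun: "EE = (\<lambda>z. cos (2 * \<i> * csqrt (-z)))"
  using EE_alt by auto

lemma EE_cont0: "isCont EE 0"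
proof -
  have "(csqrt \<longlongrightarrow> 0) (at 0)"
  proof (rule tendsto_norm_zero_cancel)
    have "isCont (\<lambda>z::complex. sqrt (norm z)) 0"
      by (intro continuous_intros)
    then have "((\<lambda>z::complex. sqrt (norm z)) \<longlongrightarrow> sqrt (norm (0::complex))) (at 0)"
      by (simp add: isCont_def)
    then show "((\<lambda>x. norm (csqrt x)) \<longlongrightarrow> 0) (at 0)" by simp
  qed
  then have "((\<lambda>z. cos (2 * csqrt z)) \<longlongrightarrow> cos (2 * 0)) (at 0)"
    by (intro tendsto_intros)
  then show ?thesis unfolding isCont_def EE_def by simp
qed

lemma EE_deriv: "z \<notin> \<real>\<^sub>\<le>\<^sub>0 \<Longrightarrow> (EE has_field_derivative (- sin (2 * csqrt z) / csqrt z)) (at z)"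
proof -
  assume z: "z \<notin> \<real>\<^sub>\<le>\<^sub>0"
  then have nz: "csqrt z \<noteq> 0" by auto
  have "((\<lambda>z. cos (2 * csqrt z)) has_field_derivative (- sin (2 * csqrt z) / csqrt z)) (at z)"
    apply (insert z nz) apply (rule derivative_eq_intros refl | assumption)+
    by (simp add: field_simps)
  then show ?thesis by (simp only: EE_def[abs_def])
qed

lemma EE_diff: "z \<noteq> 0 \<Longrightarrow> EE field_differentiable at z"
proof (cases "z \<in> \<real>\<^sub>\<le>\<^sub>0")
  case False
  then show ?thesis using EE_deriv[of z] unfolding field_differentiable_def by (intro exI)
next
  case True
  assume "z \<noteq> 0"
  then have z: "-z \<notin> \<real>\<^sub>\<le>\<^sub>0" using True by (auto simp: complex_nonpos_Reals_iff complex_eq_iff)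
  have "((\<lambda>z. cos (2 * \<i> * csqrt (-z))) has_field_derivative
     (- sin (2 * \<i> * csqrt (-z)) * (2 * \<i> * (-1 / (2 * csqrt (-z)))))) (at z)"
    apply (insert z) apply (rule derivative_eq_intros refl | assumption)+
    by simp
  then show ?thesis unfolding EE_alt_fun field_differentiable_def by (intro exI)
qed

lemma EE_holo: "EE holomorphic_on UNIV"
proof (rule no_isolated_singularity[where K = "{0}"])
  show "continuous_on UNIV EE"
  proof (rule continuous_at_imp_continuous_on, rule ballI)
    fix x :: complex
    show "isCont EE x"
    proof (cases "x = 0")
      case True then show ?thesis using EE_cont0 by simp
    next
      case False then show ?thesis using EE_diff[of x] field_differentiable_imp_continuous_at by auto
    qed
  qed
  show "EE holomorphic_on UNIV - {0}"
    unfolding holomorphic_on_def using EE_diff field_differentiable_at_within by auto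
qed auto

lemma EE_cnj: "EE (cnj z) = cnj (EE z)"
proof -
  have h: "cnj (csqrt z) ^ 2 = cnj z" by (metis complex_cnj_power power2_csqrt)
  show ?thesis unfolding EE_def cnj_cos
    by (rule cos_eq_of_sq_eq) (simp add: power_mult_distrib h)
qed

lemma EE_real: "Im z = 0 \<Longrightarrow> Im (EE z) = 0"
proof -
  assume "Im z = 0"
  then have "cnj z = z" by (simp add: complex_eq_iff)
  then have "cnj (EE z) = EE z" using EE_cnj[of z] by simp
  then have "Im (cnj (EE z)) = Im (EE z)" by simp
  then show ?thesis by simp
qed

lemma EE_neg: "x \<le> 0 \<Longrightarrow> EE (of_real x) = of_real (cosh (2 * sqrt (- x)))"
proof -
  assume x: "x \<le> 0"
  have "EE (of_real x) = cos (2 * \<i> * csqrt (of_real (-x)))" by (simp add: EE_alt)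
  also have "csqrt (of_real (-x)) = of_real (sqrt (-x))" using x by (simp add: csqrt_of_real)
  also have "cos (2 * \<i> * complex_of_real (sqrt (-x))) = cos (\<i> * of_real (2 * sqrt (-x)))"
    by (simp only: of_real_mult of_real_numeral mult_ac)
  also have "\<dots> = of_real (cosh (2 * sqrt (- x)))"
  proof -
    have "cosh (2 * sqrt (- x)) = (exp (2 * sqrt (- x)) + inverse (exp (2 * sqrt (- x)))) / 2"
      by (simp add: cosh_def exp_minus)
    then show ?thesis by (simp only:) (rule cosh_real[symmetric])
  qed
  finally show ?thesis .
qed

lemma EE_pos: "x \<ge> 0 \<Longrightarrow> EE (of_real x) = of_real (cos (2 * sqrt x))"
proof -
  assume "x \<ge> 0"
  then have "EE (of_real x) = cos (2 * of_real (sqrt x))" by (simp add: EE_def csqrt_of_real)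
  also have "\<dots> = cos (of_real (2 * sqrt x))" by simp
  also have "\<dots> = of_real (cos (2 * sqrt x))" by (rule cos_of_real)
  finally show ?thesis .
qed

definition JJ :: "complex set" where "JJ = {s. Im s = 0 \<and> \<bar>Re s\<bar> \<le> 2}"
definition Gf :: "complex \<Rightarrow> complex" where "Gf s = s / 2 * (1 + csqrt (1 - 4 / s^2))"
definition Gup :: "complex \<Rightarrow> complex" where "Gup s = s / 2 + \<i> * csqrt (1 - s^2 / 4)"
definition Gdn :: "complex \<Rightarrow> complex" where "Gdn s = s / 2 - \<i> * csqrt (1 - s^2 / 4)"

lemma sq_real_pos_imp_real:
  fixes s :: complex
  assumes "Im (s^2) = 0" "Re (s^2) > 0"
  shows "Im s = 0"
proof -
  have "Re s * Im s = 0" using assms(1) by (auto simp: power2_eq_square)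
  moreover have "Re s ^ 2 - Im s ^ 2 > 0" using assms(2) by (simp add: power2_eq_square)
  ultimately show ?thesis
  proof (cases "Re s = 0")
    case True
    then show ?thesis using \<open>Re s ^ 2 - Im s ^ 2 > 0\<close> by simp
  qed simp
qed

lemma JJ_closed: "closed JJ"
proof -
  have "JJ = {s. Im s = 0} \<inter> {s. Re s \<le> 2} \<inter> {s. Re s \<ge> -2}" by (auto simp: JJ_def)
  show ?thesis by (subst \<open>JJ = _\<close>) (intro closed_Int closed_Collect_le closed_Collect_eq continuous_intros)
qed

lemma notJJ_nz: "s \<notin> JJ \<Longrightarrow> s \<noteq> 0"
  by (auto simp: JJ_def)

lemma notJJ_arg:
  assumes "s \<notin> JJ" shows "1 - 4 / s^2 \<notin> \<real>\<^sub>\<le>\<^sub>0"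
proof
  assume u: "1 - 4 / s^2 \<in> \<real>\<^sub>\<le>\<^sub>0"
  have s0: "s \<noteq> 0" using assms by (rule notJJ_nz)
  define c where "c = Re (1 - 4 / s^2)"
  have ci: "1 - 4 / s^2 = of_real c" and c0: "c \<le> 0" using u by (auto simp: c_def complex_nonpos_Reals_iff complex_eq_iff)
  have w: "4 / s^2 = of_real (1 - c)" using ci by (simp add: algebra_simps)
  have w0: "(of_real (1 - c) :: complex) \<noteq> 0" using c0 by simp
  have "s^2 = 4 / of_real (1 - c)" using w s0 w0 by (simp add: field_simps)
  then have s2: "s^2 = of_real (4 / (1 - c))" by simp
  have q: "4 / (1 - c) > 0" "4 / (1 - c) \<le> 4" using c0 by (auto simp: field_simps)
  have "Im s = 0" by (rule sq_real_pos_imp_real) (use s2 q in auto)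
  moreover have "Re (s^2) = 4 / (1 - c)" using s2 by simp
  moreover have "Re (s^2) = Re s ^ 2" using \<open>Im s = 0\<close> by (simp add: power2_eq_square)
  ultimately have "Re s ^ 2 \<le> 2 ^ 2" using q by simp
  then have "\<bar>Re s\<bar> \<le> 2" using power2_le_iff_abs_le[of 2 "Re s"] by simp
  then have "s \<in> JJ" using \<open>Im s = 0\<close> by (simp add: JJ_def)
  then show False using assms by simp
qed

lemma Gf_root: "s \<noteq> 0 \<Longrightarrow> Gf s ^ 2 - s * Gf s + 1 = 0"
proof -
  assume s0: "s \<noteq> 0"
  define q where "q = csqrt (1 - 4 / s^2)"
  have q2: "q^2 = 1 - 4 / s^2" by (simp add: q_def)
  have G: "Gf s = s / 2 * (1 + q)" by (simp add: Gf_def q_def)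
  have "Gf s ^ 2 - s * Gf s + 1 = s^2 / 4 * (q^2 - 1) + 1"
    unfolding G by (simp add: field_simps power2_eq_square)
  also have "\<dots> = 0" using s0 by (simp add: q2 field_simps)
  finally show ?thesis .
qed

lemma csqrt_Re_pos: "u \<notin> \<real>\<^sub>\<le>\<^sub>0 \<Longrightarrow> Re (csqrt u) > 0"
proof (rule ccontr)
  assume u: "u \<notin> \<real>\<^sub>\<le>\<^sub>0" and "\<not> Re (csqrt u) > 0"
  then have r0: "Re (csqrt u) = 0" "Im (csqrt u) \<ge> 0" using csqrt_principal[of u] by auto
  have "u = (csqrt u)^2" by simp
  also have "\<dots> = - of_real ((Im (csqrt u))^2)" using r0 by (simp add: complex_eq_iff power2_eq_square)
  finally have "u = - of_real ((Im (csqrt u))^2)" by simp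
  then obtain y where "u = - of_real (y^2)" by blast
  then have "u \<in> \<real>\<^sub>\<le>\<^sub>0" by (simp add: complex_nonpos_Reals_iff)
  then show False using u by simp
qed

lemma norm_gt_lemma:
  fixes u v :: complex
  assumes "Re (u * cnj v) > 0"
  shows "cmod (u + v) > cmod (u - v)"
proof -
  have "(cmod (u + v))^2 - (cmod (u - v))^2 = 4 * Re (u * cnj v)"
    by (simp only: cmod_power2) (simp add: algebra_simps power2_eq_square)
  then have "(cmod (u - v))^2 < (cmod (u + v))^2" using assms by simp
  then show ?thesis by (simp add: power_less_imp_less_base)
qed

lemma prod_one_gt:
  fixes a b :: complex
  assumes "a * b = 1" "cmod a > cmod b"
  shows "cmod a > 1"
proof (rule ccontr)
  assume "\<not> cmod a > 1"
  then have "cmod a \<le> 1" by simp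
  moreover have "cmod a * cmod b = 1" using assms(1) by (metis norm_mult norm_one)
  have "cmod a * cmod b \<le> 1 * cmod b" by (rule mult_right_mono) (use \<open>cmod a \<le> 1\<close> in auto)
  then show False using assms(2) \<open>cmod a \<le> 1\<close> \<open>cmod a * cmod b = 1\<close> by simp
qed

lemma Gf_norm_gt1:
  assumes "s \<notin> JJ" shows "cmod (Gf s) > 1"
proof -
  have s0: "s \<noteq> 0" using assms by (rule notJJ_nz)
  define q where "q = csqrt (1 - 4 / s^2)"
  have q2: "q^2 = 1 - 4 / s^2" by (simp add: q_def)
  have qr: "Re q > 0" unfolding q_def by (rule csqrt_Re_pos[OF notJJ_arg[OF assms]])
  have G: "Gf s = s / 2 * (1 + q)" by (simp add: Gf_def q_def)
  have prod: "(s / 2 * (1 + q)) * (s / 2 * (1 - q)) = 1"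
  proof -
    have "(s / 2 * (1 + q)) * (s / 2 * (1 - q)) = s^2 / 4 * (1 - q^2)"
      by (simp add: field_simps power2_eq_square)
    also have "\<dots> = 1" using s0 by (simp add: q2 field_simps)
    finally show ?thesis .
  qed
  have "cmod (1 + q) > cmod (1 - q)" by (rule norm_gt_lemma) (use qr in simp)
  then have "cmod (s / 2 * (1 + q)) > cmod (s / 2 * (1 - q))"
    using s0 by (simp add: norm_mult)
  then show ?thesis unfolding G using prod_one_gt[OF prod] by blast
qed

lemma Gf_holo: "Gf holomorphic_on (- JJ)"
  unfolding Gf_def[abs_def]
  by (intro holomorphic_intros) (auto simp: notJJ_arg notJJ_nz)

lemma open_notJJ: "open (- JJ)"
  using JJ_closed by (simp add: open_Compl)

lemma Gf_cnj: "s \<notin> JJ \<Longrightarrow> Gf (cnj s) = cnj (Gf s)"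
  using notJJ_arg[of s] by (simp add: Gf_def cnj_csqrt)

lemma Gup_root: "Gup s ^ 2 - s * Gup s + 1 = 0"
proof -
  define c where "c = csqrt (1 - s^2 / 4)"
  have c2: "c^2 = 1 - s^2/4" by (simp add: c_def)
  have G: "Gup s = s / 2 + \<i> * c" by (simp add: Gup_def c_def)
  have "Gup s ^ 2 - s * Gup s + 1 = 1 - s^2 / 4 - c^2"
    unfolding G by (simp add: power2_eq_square field_simps)
  then show ?thesis by (simp add: c2)
qed

lemma nonpos_imp_real:
  assumes "1 - s^2 / 4 \<in> \<real>\<^sub>\<le>\<^sub>0" shows "Im s = 0"
proof -
  define c where "c = Re (1 - s^2 / 4)"
  have ci: "1 - s^2 / 4 = of_real c" and c0: "c \<le> 0" using assms by (auto simp: c_def complex_nonpos_Reals_iff complex_eq_iff)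
  have "s^2 = 4 - 4 * of_real c" using ci by (simp add: field_simps)
  then have s2: "s^2 = of_real (4 - 4 * c)" by simp
  show ?thesis by (rule sq_real_pos_imp_real) (use s2 c0 in auto)
qed

lemma Gup_gt1:
  assumes "Im s > 0" shows "cmod (Gup s) > 1"
proof -
  define c where "c = csqrt (1 - s^2 / 4)"
  have c2: "c^2 = 1 - s^2/4" by (simp add: c_def)
  have nn: "1 - s^2 / 4 \<notin> \<real>\<^sub>\<le>\<^sub>0" using nonpos_imp_real assms by fastforce
  have x0: "Re c > 0" unfolding c_def by (rule csqrt_Re_pos[OF nn])
  have "Im (c^2) = Im (1 - s^2/4)" by (simp add: c2)
  moreover have "Im (c^2) = 2 * (Re c * Im c)" by (simp add: power2_eq_square)
  moreover have "Im (1 - s^2/4) = - (Re s * Im s) / 2" by (simp add: power2_eq_square)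
  ultimately have im: "4 * (Re c * Im c) = - (Re s * Im s)" by linarith
  have im2: "Re c * Im c = - (Re s * Im s) / 4" using im by simp
  have "Re c * (Im s * Re c - Re s * Im c) = Im s * (Re c)^2 - Re s * (Re c * Im c)"
    by (simp add: algebra_simps power2_eq_square)
  also have "\<dots> = Im s * (Re c)^2 + (Re s)^2 * Im s / 4"
    unfolding im2 by (simp add: algebra_simps power2_eq_square)
  also have "\<dots> > 0" using assms x0 by (intro add_pos_nonneg) auto
  finally have pos: "Im s * Re c - Re s * Im c > 0" using x0 by (simp add: zero_less_mult_iff)
  have prod: "(s / 2 + \<i> * c) * (s / 2 - \<i> * c) = 1"
  proof -
    have "(s / 2 + \<i> * c) * (s / 2 - \<i> * c) = s^2 / 4 + c^2"
      by (simp add: field_simps power2_eq_square)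
    then show ?thesis by (simp add: c2)
  qed
  have "Re (s / 2 * cnj (\<i> * c)) = (Im s * Re c - Re s * Im c) / 2" by (simp add: field_simps)
  then have "cmod (s / 2 + \<i> * c) > cmod (s / 2 - \<i> * c)"
    using pos by (intro norm_gt_lemma) simp
  then show ?thesis unfolding Gup_def c_def[symmetric] using prod_one_gt[OF prod] by blast
qed

lemma roots_eq_or:
  fixes a b s :: complex
  assumes "a^2 - s * a + 1 = 0" "b^2 - s * b + 1 = 0"
  shows "b = a \<or> b * a = 1"
proof -
  have "(b - a) * (b + a - s) = (b^2 - s*b + 1) - (a^2 - s*a + 1)"
    by (simp add: algebra_simps power2_eq_square)
  then have "(b - a) * (b + a - s) = 0" using assms by simp
  then have "b - a = 0 \<or> b + a - s = 0" by (simp only: mult_eq_0_iff)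
  moreover have "b + a - s = 0 \<Longrightarrow> b = s - a" by (simp add: algebra_simps)
  ultimately have "b = a \<or> b = s - a" by auto
  moreover have "(s - a) * a = 1" using assms(1) by (simp add: algebra_simps power2_eq_square)
  ultimately show ?thesis by auto
qed

lemma root_gt1_unique:
  fixes a b s :: complex
  assumes "a^2 - s * a + 1 = 0" "b^2 - s * b + 1 = 0" "cmod a > 1" "cmod b > 1"
  shows "b = a"
proof -
  have "b * a \<noteq> 1"
  proof
    assume "b * a = 1"
    then have "cmod b * cmod a = 1" by (metis norm_mult norm_one)
    moreover have "cmod b * cmod a > 1 * 1" using assms(3,4) by (intro mult_strict_mono) auto
    ultimately show False by simp
  qed
  then show ?thesis using roots_eq_or[OF assms(1,2)] by blast
qed

lemma Gf_up: "Im s > 0 \<Longrightarrow> Gf s = Gup s"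
proof -
  assume h: "Im s > 0"
  then have sJ: "s \<notin> JJ" by (auto simp: JJ_def)
  show ?thesis
    by (rule root_gt1_unique[OF Gup_root Gf_root[OF notJJ_nz[OF sJ]] Gup_gt1[OF h] Gf_norm_gt1[OF sJ]])
qed

lemma Gf_dn: "Im s < 0 \<Longrightarrow> Gf s = Gdn s"
proof -
  assume h: "Im s < 0"
  then have sJ: "s \<notin> JJ" by (auto simp: JJ_def)
  have nn: "1 - s^2 / 4 \<notin> \<real>\<^sub>\<le>\<^sub>0" using nonpos_imp_real h by fastforce
  have "Gf s = cnj (Gf (cnj s))" using Gf_cnj[OF sJ] by simp
  also have "Gf (cnj s) = Gup (cnj s)" using h by (intro Gf_up) simp
  also have "cnj (Gup (cnj s)) = Gdn s"
  proof -
    have "csqrt (1 - (cnj s)^2/4) = cnj (csqrt (1 - s^2/4))" using cnj_csqrt[OF nn] by simp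
    then show ?thesis by (simp add: Gup_def Gdn_def)
  qed
  finally show ?thesis .
qed

lemma root_bound:
  fixes w s :: complex
  assumes "w^2 - s * w + 1 = 0"
  shows "cmod w \<le> cmod s + 1"
proof (cases "cmod w \<le> 1")
  case True then show ?thesis by (smt (verit) norm_ge_zero)
next
  case False
  have "w * w = s * w - 1" using assms by (simp add: algebra_simps power2_eq_square)
  then have "cmod w * cmod w = cmod (s * w - 1)" by (metis norm_mult)
  also have "\<dots> \<le> cmod s * cmod w + 1" by (metis norm_mult norm_one norm_triangle_ineq4)
  also have "\<dots> < cmod s * cmod w + cmod w" using False by simp
  finally have "cmod w * cmod w < (cmod s + 1) * cmod w" by (simp add: algebra_simps)
  moreover have "cmod w > 0" using False by linarith
  ultimately show ?thesis using mult_right_less_imp_less[of "cmod w" "cmod w" "cmod s + 1"] by simp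
qed

lemma root_near:
  fixes w s :: complex
  assumes "w^2 - s * w + 1 = 0"
  shows "cmod (w - 1) ^ 2 \<le> cmod (s - 2) * (cmod s + 1)"
    and "cmod (w + 1) ^ 2 \<le> cmod (s + 2) * (cmod s + 1)"
proof -
  have b: "cmod w \<le> cmod s + 1" by (rule root_bound[OF assms])
  have "(w - 1)^2 = (s - 2) * w" using assms by (simp add: algebra_simps power2_eq_square)
  then have "cmod (w - 1) ^ 2 = cmod (s - 2) * cmod w" by (metis norm_mult norm_power)
  also have "\<dots> \<le> cmod (s - 2) * (cmod s + 1)" using b by (simp add: mult_left_mono)
  finally show "cmod (w - 1) ^ 2 \<le> cmod (s - 2) * (cmod s + 1)" .
  have "(w + 1)^2 = (s + 2) * w" using assms by (simp add: algebra_simps power2_eq_square)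
  then have "cmod (w + 1) ^ 2 = cmod (s + 2) * cmod w" by (metis norm_mult norm_power)
  also have "\<dots> \<le> cmod (s + 2) * (cmod s + 1)" using b by (simp add: mult_left_mono)
  finally show "cmod (w + 1) ^ 2 \<le> cmod (s + 2) * (cmod s + 1)" .
qed

lemma root_tendsto:
  fixes W S :: "'a \<Rightarrow> complex"
  assumes "(S \<longlongrightarrow> 2 * e) F" "e = 1 \<or> e = -1"
    and "\<forall>\<^sub>F z in F. (W z)^2 - S z * W z + 1 = 0"
  shows "(W \<longlongrightarrow> e) F"
proof -
  let ?g = "\<lambda>z. sqrt (cmod (S z - 2 * e) * (cmod (S z) + 1))"
  have "(?g \<longlongrightarrow> sqrt (cmod (2 * e - 2 * e) * (cmod (2 * e) + 1))) F"
    by (intro tendsto_intros assms(1))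
  then have g0: "(?g \<longlongrightarrow> 0) F" by simp
  have "\<forall>\<^sub>F z in F. norm (W z - e) \<le> ?g z"
    using assms(3)
  proof eventually_elim
    case (elim z)
    have "cmod (W z - e) ^ 2 \<le> cmod (S z - 2 * e) * (cmod (S z) + 1)"
      using root_near[OF elim] assms(2) by auto
    then show ?case by (simp add: real_le_rsqrt)
  qed
  then have "((\<lambda>z. W z - e) \<longlongrightarrow> 0) F" using g0 by (rule Lim_null_comparison)
  then show ?thesis by (simp add: LIM_zero_iff)
qed

lemma cos_real_bounded_imp_real:
  fixes w :: complex
  assumes "Im (cos w) = 0" "\<bar>Re (cos w)\<bar> \<le> 1"
  shows "Im w = 0"
proof (rule ccontr)
  assume y: "Im w \<noteq> 0"
  define u where "u = exp (Im w)"
  have u0: "u > 0" by (simp add: u_def)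
  have u1: "u \<noteq> 1" using y by (simp add: u_def)
  have em: "exp (- Im w) = 1 / u" by (simp add: u_def exp_minus field_simps)
  have "exp (- Im w) - exp (Im w) \<noteq> 0" using y by simp
  then have "sin (Re w) = 0" using assms(1) by (simp add: Im_cos)
  then have "\<bar>cos (Re w)\<bar> = 1" using sin_cos_squared_add[of "Re w"] by (simp add: abs_square_eq_1)
  have "(u - 1)^2 > 0" using u1 by simp
  then have "u + 1 / u > 2" using u0 by (simp add: field_simps power2_eq_square algebra_simps)
  then have "(exp (Im w) + exp (- Im w)) / 2 > 1" by (simp add: em u_def[symmetric])
  then have "\<bar>Re (cos w)\<bar> > 1" using \<open>\<bar>cos (Re w)\<bar> = 1\<close> by (simp add: Re_cos abs_mult)
  then show False using assms(2) by simp
qed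

locale setting =
  fixes dB dR :: nat
  assumes dB1: "dB \<ge> 1" and dR1: "dR \<ge> 1"
begin

definition "rr = 1 / sqrt (real (dR * dB))"
abbreviation "D \<equiv> DD dB dR"
abbreviation "A \<equiv> AA dB dR"
abbreviation "B \<equiv> BB dB dR"
definition "tt z = of_real A + of_real B * EE z"
definition "ss z = tt z / of_real rr"
definition "mp z = of_real rr * Gf (ss z)"
definition "mm z = of_real D / mp z"

lemma rr_pos: "rr > 0" using dB1 dR1 by (simp add: rr_def)
lemma rr_sq: "rr^2 = D" using dB1 dR1 by (simp add: rr_def DD_def power_divide)
lemma D_pos: "D > 0" using dB1 dR1 by (simp add: DD_def)
lemma B_pos: "B > 0" using dB1 dR1 by (simp add: BB_def DD_def aa_def add_pos_pos)
lemma AB_sum: "A + B = 1 + D" unfolding AA_def BB_def by (simp add: field_simps)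
lemma AB_diff: "B - A = aa dB dR" unfolding AA_def BB_def by (simp add: field_simps)
lemma ineq1: "2 * rr \<le> 1 + D"
proof -
  have "0 \<le> (1 - rr)^2" by simp
  then show ?thesis using rr_sq by (simp add: power2_eq_square algebra_simps)
qed
lemma ineq2: "2 * rr \<le> aa dB dR"
proof -
  define p where "p = 1 / sqrt (real dR)"
  define q where "q = 1 / sqrt (real dB)"
  have "rr = p * q" by (simp add: rr_def p_def q_def real_sqrt_mult)
  moreover have "aa dB dR = p^2 + q^2" using dB1 dR1 by (simp add: aa_def p_def q_def power_divide)
  moreover have "0 \<le> (p - q)^2" by simp
  ultimately show ?thesis by (simp add: power2_eq_square algebra_simps)
qed

lemma eig_iff: "is_eigenvalue (T0 dB dR z) m \<longleftrightarrow> m^2 - tt z * m + of_real D = 0"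
  by (simp add: eig2_iff trace_T0[OF dB1 dR1] det_T0 tt_def)

lemma eig_iff_w: "is_eigenvalue (T0 dB dR z) (of_real rr * w) \<longleftrightarrow> w^2 - ss z * w + 1 = 0"
proof -
  have r0: "(of_real rr :: complex) \<noteq> 0" using rr_pos by simp
  have Dr: "(of_real D :: complex) = of_real rr ^ 2" using rr_sq by (metis of_real_power)
  have "(of_real rr * w)^2 - tt z * (of_real rr * w) + of_real D = (of_real rr)^2 * (w^2 - ss z * w + 1)"
    using r0 by (simp add: Dr ss_def field_simps power2_eq_square)
  then show ?thesis using r0 by (simp add: eig_iff)
qed

lemma rr_eq: "1 / sqrt (real (dR * dB)) = rr" by (simp add: rr_def)

lemma sigma1_iff: "z \<in> sigma1 dB dR \<longleftrightarrow> ss z \<in> JJ"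
proof
  assume "z \<in> sigma1 dB dR"
  then obtain m where m: "is_eigenvalue (T0 dB dR z) m" "cmod m = rr"
    unfolding sigma1_def rr_eq by auto
  define w where "w = m / of_real rr"
  have mw: "m = of_real rr * w" using rr_pos by (simp add: w_def)
  have root: "w^2 - ss z * w + 1 = 0" using m(1) eig_iff_w mw by simp
  have w1: "cmod w = 1" using m(2) rr_pos by (simp add: w_def norm_divide)
  then have w0: "w \<noteq> 0" by auto
  have wc: "w * cnj w = 1" using complex_norm_square[of w] w1 by simp
  have "ss z * w = w * (w + cnj w)" using root wc by (simp add: algebra_simps power2_eq_square)
  then have sw: "ss z = w + cnj w" using w0 by (simp add: mult.commute)
  have "\<bar>Re w\<bar> \<le> 1" using abs_Re_le_cmod[of w] w1 by simp
  then show "ss z \<in> JJ" using sw by (simp add: JJ_def)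
next
  assume sJ: "ss z \<in> JJ"
  define \<sigma> where "\<sigma> = Re (ss z)"
  have s\<sigma>: "ss z = of_real \<sigma>" and \<sigma>2: "\<bar>\<sigma>\<bar> \<le> 2" using sJ by (auto simp: JJ_def \<sigma>_def complex_eq_iff)
  have nn: "1 - \<sigma>^2/4 \<ge> 0"
  proof -
    have "\<sigma>^2 \<le> 2^2" using \<sigma>2 power2_le_iff_abs_le[of 2 \<sigma>] by simp
    then show ?thesis by simp
  qed
  define w where "w = Gup (ss z)"
  have wexp: "w = of_real (\<sigma>/2) + \<i> * of_real (sqrt (1 - \<sigma>^2/4))"
  proof -
    have "csqrt (1 - (of_real \<sigma>)^2 / 4) = csqrt (of_real (1 - \<sigma>^2/4))" by simp
    also have "\<dots> = of_real (sqrt (1 - \<sigma>^2/4))" using nn by (rule csqrt_of_real)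
    finally show ?thesis by (simp add: w_def Gup_def s\<sigma>)
  qed
  have "cmod w = 1"
  proof -
    have "(cmod w)^2 = (\<sigma>/2)^2 + (sqrt (1 - \<sigma>^2/4))^2" by (simp add: wexp cmod_power2)
    also have "\<dots> = 1" using nn by (simp add: power_divide)
    finally show ?thesis using norm_ge_zero[of w] by (auto simp: power2_eq_1_iff)
  qed
  moreover have "is_eigenvalue (T0 dB dR z) (of_real rr * w)"
    unfolding eig_iff_w w_def by (rule Gup_root)
  ultimately show "z \<in> sigma1 dB dR"
    unfolding sigma1_def rr_eq using rr_pos by (auto simp: norm_mult)
qed

lemma sigma1_real: "ss z \<in> JJ \<Longrightarrow> Im z = 0 \<and> Re z \<ge> 0"
proof -
  assume sJ: "ss z \<in> JJ"
  define \<sigma> where "\<sigma> = Re (ss z)"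
  have s\<sigma>: "ss z = of_real \<sigma>" and \<sigma>2: "\<bar>\<sigma>\<bar> \<le> 2" using sJ by (auto simp: JJ_def \<sigma>_def complex_eq_iff)
  have "EE z = (of_real rr * ss z - of_real A) / of_real B"
    using rr_pos B_pos by (simp add: ss_def tt_def field_simps)
  then have E: "EE z = of_real ((rr * \<sigma> - A) / B)" by (simp add: s\<sigma>)
  have "-1 \<le> (rr * \<sigma> - A) / B" "(rr * \<sigma> - A) / B \<le> 1"
  proof -
    have "rr * (-2) \<le> rr * \<sigma>" "rr * \<sigma> \<le> rr * 2"
      using \<sigma>2 rr_pos by (intro mult_left_mono; auto simp: abs_le_iff)+
    then show "-1 \<le> (rr * \<sigma> - A) / B" "(rr * \<sigma> - A) / B \<le> 1"
      using ineq1 ineq2 AB_sum AB_diff B_pos by (auto simp: field_simps)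
  qed
  then have "Im (cos (2 * csqrt z)) = 0" "\<bar>Re (cos (2 * csqrt z))\<bar> \<le> 1"
    using E by (auto simp: EE_def)
  then have "Im (2 * csqrt z) = 0" by (rule cos_real_bounded_imp_real)
  then have "Im (csqrt z) = 0" by simp
  then have "z \<in> \<real>\<^sub>\<ge>\<^sub>0" using Im_csqrt_eq_0_iff by blast
  then show ?thesis by (simp add: complex_nonneg_Reals_iff)
qed

end

lemma sign_lemma:
  fixes f f' :: "complex \<Rightarrow> complex" and x0 :: real
  assumes der: "\<And>w. w \<in> ball (of_real x0) \<delta> \<Longrightarrow> (f has_field_derivative f' w) (at w)"
    and pos: "\<And>w. w \<in> ball (of_real x0) \<delta> \<Longrightarrow> Re (f' w) > 0"
    and real: "\<And>y::real. (of_real y :: complex) \<in> ball (of_real x0) \<delta> \<Longrightarrow> Im (f (of_real y)) = 0"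
    and w: "w \<in> ball (of_real x0) \<delta>" "Im w > 0"
  shows "Im (f w) > 0"
proof -
  define u where "u = Re w"
  define v where "v = Im w"
  let ?p = "\<lambda>\<tau>::real. complex_of_real u + \<i> * of_real \<tau>"
  have inball: "?p \<tau> \<in> ball (of_real x0) \<delta>" if "0 \<le> \<tau>" "\<tau> \<le> v" for \<tau>
  proof -
    have "(dist (of_real x0) (?p \<tau>))^2 = (x0 - u)^2 + \<tau>^2"
      unfolding dist_norm cmod_power2 by simp
    also have "\<dots> \<le> (x0 - u)^2 + v^2" using that by (simp add: power_mono)
    also have "\<dots> = (dist (of_real x0) w)^2"
      unfolding dist_norm cmod_power2 by (simp add: u_def v_def power2_commute)
    finally have "dist (of_real x0) (?p \<tau>) \<le> dist (of_real x0) w"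
      by (simp add: power2_le_iff_abs_le)
    then show ?thesis using w(1) by simp
  qed
  define g where "g = (\<lambda>\<tau>. Im (f (?p \<tau>)))"
  have "g 0 < g v"
  proof (rule DERIV_pos_imp_increasing[of 0 v g])
    show "0 < v" using w(2) by (simp add: v_def)
    fix \<tau> assume t: "0 \<le> \<tau>" "\<tau> \<le> v"
    have pd: "(?p has_vector_derivative \<i>) (at \<tau>)"
      by (auto intro!: derivative_eq_intros simp: has_vector_derivative_def scaleR_conv_of_real mult.commute)
    have "((f \<circ> ?p) has_vector_derivative (\<i> * f' (?p \<tau>))) (at \<tau>)"
      by (rule field_vector_diff_chain_at[OF pd der[OF inball[OF t]]])
    then have "((\<lambda>\<tau>. Im (f (?p \<tau>))) has_field_derivative Im (\<i> * f' (?p \<tau>))) (at \<tau>)"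
      unfolding o_def by (rule has_field_derivative_Im)
    moreover have "Im (\<i> * f' (?p \<tau>)) > 0" using pos[OF inball[OF t]] by simp
    ultimately show "\<exists>y. (g has_real_derivative y) (at \<tau>) \<and> 0 < y" unfolding g_def by blast
  qed
  moreover have "Im (f (?p 0)) = 0"
  proof -
    have "?p 0 \<in> ball (of_real x0) \<delta>" using inball[of 0] w(2) by (simp add: v_def)
    then have "(of_real u :: complex) \<in> ball (of_real x0) \<delta>" by simp
    from real[OF this] show ?thesis by simp
  qed
  moreover have "?p v = w" by (simp add: u_def v_def complex_eq_iff)
  ultimately show ?thesis by (simp add: g_def)
qed

lemma real_analytic_from_holo:
  fixes h :: "complex \<Rightarrow> complex" and F :: "real \<Rightarrow> complex"
  assumes "\<delta> > 0" "h holomorphic_on ball (of_real x) \<delta>"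
    and "\<And>y. \<bar>y - x\<bar> < \<delta> \<Longrightarrow> F y = h (of_real y)"
  shows "real_analytic_at F x"
  unfolding real_analytic_at_def
proof (intro exI conjI allI impI)
  show "\<delta> > 0" by fact
  fix y assume y: "\<bar>y - x\<bar> < \<delta>"
  have yb: "of_real y \<in> ball (complex_of_real x) \<delta>"
    using y by (simp add: dist_norm norm_of_real abs_minus_commute flip: of_real_diff)
  have "(\<lambda>n. (deriv ^^ n) h (of_real x) / fact n * (of_real y - of_real x)^n) sums h (of_real y)"
    by (rule holomorphic_power_series[OF assms(2) yb])
  then show "(\<lambda>n. (deriv ^^ n) h (of_real x) / fact n * of_real (y - x) ^ n) sums F y"
    using assms(3)[OF y] by simp
qed

lemma Gdn_root: "Gdn s ^ 2 - s * Gdn s + 1 = 0"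
proof -
  define c where "c = csqrt (1 - s^2 / 4)"
  have c2: "c^2 = 1 - s^2/4" by (simp add: c_def)
  have G: "Gdn s = s / 2 - \<i> * c" by (simp add: Gdn_def c_def)
  have "Gdn s ^ 2 - s * Gdn s + 1 = 1 - s^2 / 4 - c^2"
    unfolding G by (simp add: power2_eq_square field_simps)
  then show ?thesis by (simp add: c2)
qed

lemma root_nz: "w^2 - s * w + 1 = 0 \<Longrightarrow> (w::complex) \<noteq> 0"
  by auto

lemma inv_root: "w^2 - s * w + 1 = 0 \<Longrightarrow> (1 / w)^2 - s * (1 / w) + 1 = (0::complex)"
proof -
  assume r: "w^2 - s * w + 1 = 0"
  then have w0: "w \<noteq> 0" by auto
  have "(1 / w)^2 - s * (1 / w) + 1 = (w^2 - s * w + 1) / w^2"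
    using w0 by (simp add: field_simps power2_eq_square)
  then show ?thesis using r by simp
qed

lemma Gup_cnj_real: "Im s = 0 \<Longrightarrow> \<bar>Re s\<bar> \<le> 2 \<Longrightarrow> cnj (Gup s) = Gdn s"
proof -
  assume s: "Im s = 0" "\<bar>Re s\<bar> \<le> 2"
  have "(Re s)^2 \<le> 2^2" using s(2) power2_le_iff_abs_le[of 2 "Re s"] by simp
  then have nn: "Re (1 - s^2/4) \<ge> 0" "Im (1 - s^2/4) = 0" using s(1) by (auto simp: power2_eq_square)
  then have "Im (csqrt (1 - s^2/4)) = 0"
    by (subst csqrt_of_real_nonneg) auto
  then have "cnj (csqrt (1 - s^2/4)) = csqrt (1 - s^2/4)" by (simp add: complex_eq_iff)
  then show ?thesis using s(1) by (simp add: Gup_def Gdn_def complex_eq_iff)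
qed

lemma Gdn_cnj_real: "Im s = 0 \<Longrightarrow> \<bar>Re s\<bar> \<le> 2 \<Longrightarrow> cnj (Gdn s) = Gup s"
  using Gup_cnj_real by (metis complex_cnj_cnj)

context setting
begin

lemma ss_holo: "ss holomorphic_on S"
proof -
  have "ss holomorphic_on UNIV"
    unfolding ss_def[abs_def] tt_def
    using rr_pos by (intro holomorphic_intros EE_holo[THEN holomorphic_on_subset]) auto
  then show ?thesis using holomorphic_on_subset by blast
qed

lemma ss_isCont: "isCont ss z"
proof -
  have "continuous_on UNIV ss" using ss_holo[of UNIV] holomorphic_on_imp_continuous_on by blast
  then show ?thesis by (simp add: continuous_on_eq_continuous_at)
qed

lemma ss_cnj: "ss (cnj z) = cnj (ss z)"
  by (simp add: ss_def tt_def EE_cnj)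

lemma ss_real: "Im z = 0 \<Longrightarrow> Im (ss z) = 0"
  using rr_pos by (simp add: ss_def tt_def EE_real)

definition "dss z = of_real B * (- sin (2 * csqrt z) / csqrt z) / of_real rr"

lemma ss_deriv: "z \<notin> \<real>\<^sub>\<le>\<^sub>0 \<Longrightarrow> (ss has_field_derivative dss z) (at z)"
  unfolding ss_def[abs_def] tt_def dss_def
  using rr_pos by (auto intro!: derivative_eq_intros EE_deriv)

lemma sigma1_vimage: "sigma1 dB dR = ss -` JJ"
  using sigma1_iff by auto

lemma sigma1_closed: "closed (sigma1 dB dR)"
  unfolding sigma1_vimage by (intro continuous_closed_vimage JJ_closed ss_isCont)

lemma open_nsigma: "open (- sigma1 dB dR)"
  using sigma1_closed by (simp add: open_Compl)

lemma nsigma_JJ: "z \<notin> sigma1 dB dR \<longleftrightarrow> ss z \<notin> JJ"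
  using sigma1_iff by auto

lemma mp_holo: "mp holomorphic_on (- sigma1 dB dR)"
proof -
  have "(Gf \<circ> ss) holomorphic_on (- sigma1 dB dR)"
    by (rule holomorphic_on_compose_gen[OF ss_holo Gf_holo]) (auto simp: nsigma_JJ)
  then show ?thesis unfolding mp_def[abs_def] by (intro holomorphic_intros) (simp add: o_def)
qed

lemma mp_nz: "z \<notin> sigma1 dB dR \<Longrightarrow> mp z \<noteq> 0"
  using Gf_norm_gt1[of "ss z"] rr_pos by (auto simp: mp_def nsigma_JJ)

lemma mm_holo: "mm holomorphic_on (- sigma1 dB dR)"
  unfolding mm_def[abs_def] using mp_nz by (intro holomorphic_intros mp_holo) auto

lemma mm_alt: "z \<notin> sigma1 dB dR \<Longrightarrow> mm z = of_real rr * (1 / Gf (ss z))"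
proof -
  assume z: "z \<notin> sigma1 dB dR"
  have "(of_real D :: complex) = of_real rr * of_real rr" using rr_sq by (simp add: power2_eq_square flip: of_real_mult)
  then show ?thesis using rr_pos by (simp add: mm_def mp_def)
qed

lemma mp_mm_props:
  assumes z: "z \<notin> sigma1 dB dR"
  shows "is_eigenvalue (T0 dB dR z) (mp z)" "is_eigenvalue (T0 dB dR z) (mm z)"
    "cmod (mp z) > rr" "cmod (mm z) < rr"
proof -
  have sJ: "ss z \<notin> JJ" using z nsigma_JJ by simp
  have r: "Gf (ss z) ^ 2 - ss z * Gf (ss z) + 1 = 0" by (rule Gf_root[OF notJJ_nz[OF sJ]])
  have g1: "cmod (Gf (ss z)) > 1" by (rule Gf_norm_gt1[OF sJ])
  show "is_eigenvalue (T0 dB dR z) (mp z)" unfolding mp_def eig_iff_w by (rule r)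
  show "is_eigenvalue (T0 dB dR z) (mm z)" unfolding mm_alt[OF z] eig_iff_w by (rule inv_root[OF r])
  show "cmod (mp z) > rr" using g1 rr_pos by (simp add: mp_def norm_mult)
  have "cmod (1 / Gf (ss z)) < 1" using g1 by (simp add: norm_divide divide_less_eq)
  then have "rr * cmod (1 / Gf (ss z)) < rr * 1" using rr_pos by (intro mult_strict_left_mono) auto
  then show "cmod (mm z) < rr" unfolding mm_alt[OF z] norm_mult using rr_pos by simp
qed

lemma nsigma_cnj: "z \<notin> sigma1 dB dR \<Longrightarrow> cnj z \<notin> sigma1 dB dR"
  by (simp add: nsigma_JJ ss_cnj JJ_def)

lemma mp_cnj: "z \<notin> sigma1 dB dR \<Longrightarrow> mp (cnj z) = cnj (mp z)"
  by (simp add: mp_def ss_cnj Gf_cnj nsigma_JJ)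

lemma mm_cnj: "z \<notin> sigma1 dB dR \<Longrightarrow> mm (cnj z) = cnj (mm z)"
  by (simp add: mm_def mp_cnj)

lemma Im_nz_nsigma: "Im z \<noteq> 0 \<Longrightarrow> z \<notin> sigma1 dB dR"
  using sigma1_real sigma1_iff by blast

end

context setting
begin

definition "GU x = (if ss (of_real x) \<in> JJ then (if sin (2 * sqrt x) > 0 then Gdn (ss (of_real x)) else Gup (ss (of_real x))) else Gf (ss (of_real x)))"
definition "mpU x = of_real rr * GU x"
definition "mpL x = cnj (mpU x)"
definition "mmU x = of_real D / mpU x"
definition "mmL x = cnj (mmU x)"

lemma GU_root: "GU x ^ 2 - ss (of_real x) * GU x + 1 = 0"
  unfolding GU_def using Gup_root Gdn_root Gf_root notJJ_nz by auto

lemma GU_nz: "GU x \<noteq> 0"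
  using GU_root[of x] root_nz by blast

lemma mpU_nz: "mpU x \<noteq> 0"
  using GU_nz rr_pos by (simp add: mpU_def)

lemma ss_of_real_nonneg: "x \<ge> 0 \<Longrightarrow> ss (of_real x) = of_real ((A + B * cos (2 * sqrt x)) / rr)"
  by (simp add: ss_def tt_def EE_pos)

lemma interior_facts:
  assumes "ss (of_real x) \<in> JJ" "ss (of_real x) \<noteq> 2" "ss (of_real x) \<noteq> -2"
  shows "x > 0" "sin (2 * sqrt x) \<noteq> 0"
proof -
  have x0: "x \<ge> 0" using sigma1_real[OF assms(1)] by simp
  have "sin (2 * sqrt x) \<noteq> 0"
  proof
    assume s0: "sin (2 * sqrt x) = 0"
    then have "cos (2 * sqrt x) ^ 2 = 1" using sin_cos_squared_add[of "2 * sqrt x"] by simp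
    then have "cos (2 * sqrt x) = 1 \<or> cos (2 * sqrt x) = -1" by (simp add: power2_eq_1_iff)
    then show False
    proof
      assume c: "cos (2 * sqrt x) = 1"
      define v where "v = (1 + D) / rr"
      have sv: "ss (of_real x) = of_real v" using ss_of_real_nonneg[OF x0] c AB_sum by (simp add: v_def)
      moreover have "v \<ge> 2" using ineq1 rr_pos by (simp add: field_simps v_def)
      moreover have "\<bar>v\<bar> \<le> 2" using assms(1) sv by (simp add: JJ_def)
      ultimately have "ss (of_real x) = 2" by simp
      then show False using assms(2) by simp
    next
      assume c: "cos (2 * sqrt x) = -1"
      define v where "v = - aa dB dR / rr"
      have "A - B = - aa dB dR" using AB_diff by simp
      then have sv: "ss (of_real x) = of_real v" using ss_of_real_nonneg[OF x0] c
        by (simp add: v_def diff_divide_distrib[symmetric])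
      moreover have "v \<le> -2" using ineq2 rr_pos by (simp add: field_simps v_def)
      moreover have "\<bar>v\<bar> \<le> 2" using assms(1) sv by (simp add: JJ_def)
      ultimately have "v = -2" by simp
      then have "ss (of_real x) = -2" using sv by simp
      then show False using assms(3) by simp
    qed
  qed
  then show "sin (2 * sqrt x) \<noteq> 0" .
  show "x > 0" using x0 \<open>sin (2 * sqrt x) \<noteq> 0\<close> by (cases "x = 0") auto
qed

lemma ev_gt: fixes f :: "complex \<Rightarrow> real" shows "isCont f x \<Longrightarrow> f x > c \<Longrightarrow> eventually (\<lambda>w. f w > c) (at x)"
  by (simp add: isCont_def order_tendstoD(1))

lemma ev_lt: fixes f :: "complex \<Rightarrow> real" shows "isCont f x \<Longrightarrow> f x < c \<Longrightarrow> eventually (\<lambda>w. f w < c) (at x)"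
  by (simp add: isCont_def order_tendstoD(2))

lemma local_int:
  assumes sJ: "ss (of_real x) \<in> JJ" and s2: "ss (of_real x) \<noteq> 2" "ss (of_real x) \<noteq> -2"
    and H_def: "H = (if sin (2 * sqrt x) > 0 then Gdn else Gup)"
    and H'_def: "H' = (if sin (2 * sqrt x) > 0 then Gup else Gdn)"
  obtains \<delta> where "\<delta> > 0"
    "(\<lambda>w. H (ss w)) holomorphic_on ball (of_real x) \<delta>"
    "(\<lambda>w. H' (ss w)) holomorphic_on ball (of_real x) \<delta>"
    "\<And>w. w \<in> ball (of_real x) \<delta> \<Longrightarrow> Im w > 0 \<Longrightarrow> Gf (ss w) = H (ss w)"
    "\<And>y. \<bar>y - x\<bar> < \<delta> \<Longrightarrow> GU y = H (ss (of_real y)) \<and> cnj (GU y) = H' (ss (of_real y))"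
proof -
  let ?x = "complex_of_real x"
  have xpos: "x > 0" and sn: "sin (2 * sqrt x) \<noteq> 0" using interior_facts[OF sJ s2] by auto
  define \<sigma> where "\<sigma> = sin (2 * sqrt x)"
  define \<epsilon> where "\<epsilon> = (if \<sigma> > 0 then 1 else -1 :: real)"
  have e\<sigma>: "\<epsilon> * \<sigma> > 0" using sn by (auto simp: \<epsilon>_def \<sigma>_def)
  define s0 where "s0 = Re (ss ?x)"
  have s0i: "ss ?x = of_real s0" using ss_real[of ?x] by (simp add: s0_def complex_eq_iff)
  have "s0 \<noteq> 2" "s0 \<noteq> -2" using s2 s0i by auto
  then have s0b: "\<bar>s0\<bar> < 2" using sJ s0i by (auto simp: JJ_def)
  have xn: "?x \<notin> \<real>\<^sub>\<le>\<^sub>0" using xpos by (simp add: complex_nonpos_Reals_iff)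
  have cs: "csqrt ?x = of_real (sqrt x)" using xpos by (simp add: csqrt_of_real)
  have sqx: "sqrt x > 0" using xpos by simp
  define P where "P w \<longleftrightarrow> Re w > 0 \<and> Re (1 - ss w ^ 2 / 4) > 0 \<and> Re (ss w) < 2 \<and> Re (ss w) > -2
      \<and> \<epsilon> * Re (sin (2 * csqrt w)) > 0 \<and> \<epsilon> * Re (dss w) < 0" for w
  have cont_csqrt: "isCont csqrt ?x" using xn by (rule continuous_at_csqrt)
  have cont_dss: "isCont dss ?x"
    unfolding dss_def
    apply (intro continuous_intros continuous_Re cont_csqrt | simp)+
    using rr_pos sqx by (simp_all add: cs)
  have v1: "Re (1 - ss ?x ^ 2 / 4) > 0"
  proof -
    have "\<bar>s0\<bar>^2 < 2^2" by (rule power_strict_mono) (use s0b in auto)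
    then have "s0^2 < 2^2" by simp
    then show ?thesis by (simp add: s0i power2_eq_square)
  qed
  have sn2: "sin (2 * csqrt ?x) = of_real (sin (2 * sqrt x))"
    unfolding cs by (metis of_real_mult of_real_numeral sin_of_real)
  have v2: "\<epsilon> * Re (sin (2 * csqrt ?x)) > 0"
    using e\<sigma> by (simp add: sn2 \<sigma>_def)
  have v3: "\<epsilon> * Re (dss ?x) < 0"
  proof -
    have "dss ?x = of_real (B * (- sin (2 * sqrt x) / sqrt x) / rr)"
      unfolding dss_def sn2 by (simp add: cs)
    then have "\<epsilon> * Re (dss ?x) = - ((\<epsilon> * \<sigma>) * (B / (sqrt x * rr)))"
      by (simp add: \<sigma>_def field_simps)
    moreover have "(\<epsilon> * \<sigma>) * (B / (sqrt x * rr)) > 0" using e\<sigma> B_pos rr_pos sqx by simp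
    ultimately show ?thesis by simp
  qed
  have Px: "P ?x" unfolding P_def using xpos v1 v2 v3 s0b s0i by auto
  have "eventually P (at ?x)"
    unfolding P_def
    apply (intro eventually_conj)
    subgoal by (rule ev_gt[where f=Re]) (use xpos in \<open>simp_all add: continuous_intros\<close>)
    subgoal by (rule ev_gt[where f="\<lambda>w. Re (1 - ss w ^ 2 / 4)", OF _ v1]) (intro continuous_intros continuous_Re ss_isCont | simp)+
    subgoal by (rule ev_lt[where f="\<lambda>w. Re (ss w)"]) (use s0b s0i in \<open>simp_all add: continuous_intros ss_isCont\<close>)
    subgoal by (rule ev_gt[where f="\<lambda>w. Re (ss w)"]) (use s0b s0i in \<open>simp_all add: continuous_intros ss_isCont\<close>)
    subgoal by (rule ev_gt[where f="\<lambda>w. \<epsilon> * Re (sin (2 * csqrt w))", OF _ v2]) (intro continuous_intros continuous_Re cont_csqrt | simp)+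
    subgoal by (rule ev_lt[where f="\<lambda>w. \<epsilon> * Re (dss w)", OF _ v3]) (intro continuous_intros continuous_Re cont_dss | simp)+
    done
  then obtain d where d: "d > 0" "\<And>w. w \<noteq> ?x \<Longrightarrow> dist w ?x < d \<Longrightarrow> P w"
    unfolding eventually_at by auto
  have Pb: "P w" if "w \<in> ball ?x d" for w
    using d(2)[of w] Px that by (cases "w = ?x") (auto simp: dist_commute)
  have nonpos: "1 - ss w ^ 2 / 4 \<notin> \<real>\<^sub>\<le>\<^sub>0" if "w \<in> ball ?x d" for w
    using Pb[OF that] by (auto simp: P_def complex_nonpos_Reals_iff)
  have hol_up: "(\<lambda>w. Gup (ss w)) holomorphic_on ball ?x d"
    unfolding Gup_def using nonpos by (intro holomorphic_intros ss_holo) auto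
  have hol_dn: "(\<lambda>w. Gdn (ss w)) holomorphic_on ball ?x d"
    unfolding Gdn_def using nonpos by (intro holomorphic_intros ss_holo) auto
  have der: "(ss has_field_derivative dss w) (at w)" if "w \<in> ball ?x d" for w
    using Pb[OF that] by (intro ss_deriv) (auto simp: P_def complex_nonpos_Reals_iff)
  have realax: "Im (ss (of_real y)) = 0" for y by (rule ss_real) simp
  show ?thesis
  proof
    show "d > 0" by fact
    show "(\<lambda>w. H (ss w)) holomorphic_on ball ?x d"
      unfolding H_def by (cases "sin (2 * sqrt x) > 0") (simp_all add: hol_up hol_dn)
    show "(\<lambda>w. H' (ss w)) holomorphic_on ball ?x d"
      unfolding H'_def by (cases "sin (2 * sqrt x) > 0") (simp_all add: hol_up hol_dn)
  next
    fix w assume w: "w \<in> ball ?x d" "Im w > 0"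
    show "Gf (ss w) = H (ss w)"
    proof (cases "\<sigma> > 0")
      case True
      then have e: "\<epsilon> = 1" by (simp add: \<epsilon>_def)
      have "Im (- ss w) > 0"
      proof (rule sign_lemma[where f = "\<lambda>w. - ss w" and f' = "\<lambda>w. - dss w" and \<delta> = d and w = w])
        show "((\<lambda>w. - ss w) has_field_derivative - dss w) (at w)" if "w \<in> ball ?x d" for w
          using der[OF that] by (rule DERIV_minus)
        show "Re (- dss w) > 0" if "w \<in> ball ?x d" for w
          using Pb[OF that] e by (simp add: P_def)
        show "Im (- ss (of_real y)) = 0" if "(of_real y :: complex) \<in> ball ?x d" for y
          using realax by simp
      qed (use w in auto)
      then have "Im (ss w) < 0" by simp
      then show ?thesis using True by (simp add: Gf_dn H_def \<sigma>_def)
    next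
      case False
      then have e: "\<epsilon> = -1" by (simp add: \<epsilon>_def)
      have "Im (ss w) > 0"
      proof (rule sign_lemma[where f = ss and f' = dss and \<delta> = d and w = w])
        show "(ss has_field_derivative dss w) (at w)" if "w \<in> ball ?x d" for w
          using der[OF that] .
        show "Re (dss w) > 0" if "w \<in> ball ?x d" for w
          using Pb[OF that] e by (simp add: P_def)
        show "Im (ss (of_real y)) = 0" if "(of_real y :: complex) \<in> ball ?x d" for y
          using realax by simp
      qed (use w in auto)
      then show ?thesis using False by (simp add: Gf_up H_def \<sigma>_def)
    qed
  next
    fix y assume y: "\<bar>y - x\<bar> < d"
    have yb: "(of_real y :: complex) \<in> ball ?x d"
      using y by (simp add: dist_real_def abs_minus_commute)
    have Py: "P (of_real y)" by (rule Pb[OF yb])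
    have ypos: "y > 0" using Py by (simp add: P_def)
    have sJy: "ss (of_real y) \<in> JJ" using Py realax[of y] by (auto simp: P_def JJ_def)
    have "sin (2 * csqrt (of_real y)) = of_real (sin (2 * sqrt y))"
      using ypos by (simp add: csqrt_of_real) (metis of_real_mult of_real_numeral sin_of_real)
    then have es: "\<epsilon> * sin (2 * sqrt y) > 0" using Py by (simp add: P_def)
    have same: "sin (2 * sqrt y) > 0 \<longleftrightarrow> \<sigma> > 0"
      using es e\<sigma> by (auto simp: \<epsilon>_def split: if_splits)
    have G: "GU y = H (ss (of_real y))"
      using sJy same by (simp add: GU_def H_def \<sigma>_def)
    moreover have "cnj (GU y) = H' (ss (of_real y))"
      using sJy same Gup_cnj_real[of "ss (of_real y)"] Gdn_cnj_real[of "ss (of_real y)"]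
      by (auto simp: GU_def H'_def \<sigma>_def JJ_def)
    ultimately show "GU y = H (ss (of_real y)) \<and> cnj (GU y) = H' (ss (of_real y))" by simp
  qed
qed

end

context setting
begin

definition "HU = {z::complex. Im z \<ge> 0}"
definition "HL = {z::complex. Im z \<le> 0}"
definition "Gp z = (if Im z > 0 then mp z else mpU (Re z))"

lemma of_real_Re: "Im z = 0 \<Longrightarrow> complex_of_real (Re z) = z"
  by (simp add: complex_eq_iff)

lemma Gp_root: "z \<in> HU \<Longrightarrow> (Gp z / of_real rr)^2 - ss z * (Gp z / of_real rr) + 1 = 0"
proof -
  assume z: "z \<in> HU"
  show ?thesis
  proof (cases "Im z > 0")
    case True
    then have "z \<notin> sigma1 dB dR" by (intro Im_nz_nsigma) simp
    then have sJ: "ss z \<notin> JJ" by (simp add: nsigma_JJ)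
    show ?thesis using True rr_pos Gf_root[OF notJJ_nz[OF sJ]] by (simp add: Gp_def mp_def)
  next
    case False
    then have "Im z = 0" using z by (simp add: HU_def)
    then have e: "ss (of_real (Re z)) = ss z" by (simp add: of_real_Re)
    show ?thesis using False rr_pos GU_root[of "Re z"] by (simp add: Gp_def mpU_def e)
  qed
qed

lemma Gp_nz: "z \<in> HU \<Longrightarrow> Gp z \<noteq> 0"
proof -
  assume "z \<in> HU"
  from root_nz[OF Gp_root[OF this]] show ?thesis by auto
qed

lemma holo_isCont: "f holomorphic_on S \<Longrightarrow> open S \<Longrightarrow> z \<in> S \<Longrightarrow> isCont f z"
proof -
  assume h: "f holomorphic_on S" "open S" "z \<in> S"
  have "continuous_on S f" using h(1) by (rule holomorphic_on_imp_continuous_on)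
  then show ?thesis using h(2,3) continuous_on_eq_continuous_at by blast
qed

lemma mp_isCont: "z \<notin> sigma1 dB dR \<Longrightarrow> isCont mp z"
  by (rule holo_isCont[OF mp_holo open_nsigma]) simp

lemma ev_within: "(\<And>w. w \<in> S \<Longrightarrow> P w) \<Longrightarrow> eventually P (at z within S)"
  unfolding eventually_at_filter by (rule always_eventually) auto

lemma ss_within: "(ss \<longlongrightarrow> ss z) (at z within S)"
  using continuous_at_imp_continuous_within[OF ss_isCont[of z]] by (simp add: continuous_within)

lemma GU_boundary: "ss (of_real x) = 2 * e \<Longrightarrow> e = 1 \<or> e = -1 \<Longrightarrow> GU x = e"
proof -
  assume s: "ss (of_real x) = 2 * e" and e: "e = 1 \<or> e = -1"
  have sJ: "ss (of_real x) \<in> JJ" using s e by (auto simp: JJ_def)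
  have "Gup (2 * e) = e \<and> Gdn (2 * e) = e" using e
  proof
    assume "e = 1" then show ?thesis by (simp add: Gup_def Gdn_def)
  next
    assume "e = -1" then show ?thesis by (simp add: Gup_def Gdn_def)
  qed
  then show ?thesis unfolding GU_def using sJ s by simp
qed

lemma Gp_bdry:
  assumes zH: "z \<in> HU" and zr: "Im z = 0" and s: "ss z = 2 * e" and e: "e = 1 \<or> e = -1"
  shows "continuous (at z within HU) Gp"
proof -
  have W: "((\<lambda>w. Gp w / of_real rr) \<longlongrightarrow> e) (at z within HU)"
  proof (rule root_tendsto[where S = ss and e = e])
    show "(ss \<longlongrightarrow> 2 * e) (at z within HU)" using ss_within[of z HU] s by simp
    show "\<forall>\<^sub>F w in at z within HU. (Gp w / of_real rr)\<^sup>2 - ss w * (Gp w / of_real rr) + 1 = 0"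
      using Gp_root by (rule ev_within)
    show "e = 1 \<or> e = -1" by fact
  qed
  have "((\<lambda>w. of_real rr * (Gp w / of_real rr)) \<longlongrightarrow> of_real rr * e) (at z within HU)"
    by (rule tendsto_mult[OF tendsto_const W])
  moreover have "(\<lambda>w. of_real rr * (Gp w / of_real rr)) = Gp" using rr_pos by (simp add: fun_eq_iff)
  moreover have "Gp z = of_real rr * e"
  proof -
    have "ss (of_real (Re z)) = 2 * e" using s zr by (simp add: of_real_Re)
    then have "GU (Re z) = e" using e by (rule GU_boundary)
    then show ?thesis using zr by (simp add: Gp_def mpU_def)
  qed
  ultimately show ?thesis by (simp add: continuous_within)
qed

lemma Gp_cont: "continuous_on HU Gp"
  unfolding continuous_on_eq_continuous_within
proof (intro ballI)
  fix z assume zH: "z \<in> HU"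
  show "continuous (at z within HU) Gp"
  proof (cases "Im z > 0")
    case True
    have "z \<notin> sigma1 dB dR" using True by (intro Im_nz_nsigma) simp
    then have "continuous (at z within HU) mp" using mp_isCont continuous_at_imp_continuous_within by blast
    then show ?thesis
    proof (rule continuous_transform_within[where \<delta> = "Im z"])
      show "0 < Im z" by fact
      show "z \<in> HU" by fact
      fix w assume "w \<in> HU" "dist w z < Im z"
      then have "Im w > 0"
        using abs_Im_le_cmod[of "w - z"] by (simp add: dist_norm abs_less_iff)
      then show "mp w = Gp w" by (simp add: Gp_def)
    qed
  next
    case False
    then have zr: "Im z = 0" using zH by (simp add: HU_def)
    define x where "x = Re z"
    have zx: "z = of_real x" using zr by (simp add: x_def of_real_Re)
    consider "ss z \<notin> JJ" | "ss z \<in> JJ" "ss z \<noteq> 2" "ss z \<noteq> -2" | "ss z = 2" | "ss z = -2" by blast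
    then show ?thesis
    proof cases
      case 1
      then have zs: "z \<notin> sigma1 dB dR" by (simp add: nsigma_JJ)
      obtain e where e: "e > 0" "ball z e \<subseteq> - sigma1 dB dR"
        using open_nsigma zs open_contains_ball by blast
      have "continuous (at z within HU) mp" using mp_isCont[OF zs] continuous_at_imp_continuous_within by blast
      then show ?thesis
      proof (rule continuous_transform_within[where \<delta> = e])
        show "0 < e" by fact
        show "z \<in> HU" by fact
        fix w assume w: "w \<in> HU" "dist w z < e"
        then have "w \<in> ball z e" by (simp add: dist_commute)
        then have ws: "w \<notin> sigma1 dB dR" using e(2) by blast
        show "mp w = Gp w"
        proof (cases "Im w > 0")
          case False
          then have wr: "Im w = 0" using w by (simp add: HU_def)
          have "ss w \<notin> JJ" using ws by (simp add: nsigma_JJ)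
          then show ?thesis using False wr by (simp add: Gp_def mpU_def GU_def of_real_Re mp_def)
        qed (simp add: Gp_def)
      qed
    next
      case 2
      then have c: "ss (of_real x) \<in> JJ" "ss (of_real x) \<noteq> 2" "ss (of_real x) \<noteq> -2" unfolding zx by auto
      define H where "H = (if sin (2 * sqrt x) > 0 then Gdn else Gup)"
      define H' where "H' = (if sin (2 * sqrt x) > 0 then Gup else Gdn)"
      obtain \<delta> where d: "\<delta> > 0" "(\<lambda>w. H (ss w)) holomorphic_on ball (of_real x) \<delta>"
        "(\<lambda>w. H' (ss w)) holomorphic_on ball (of_real x) \<delta>"
        "\<And>w. w \<in> ball (of_real x) \<delta> \<Longrightarrow> Im w > 0 \<Longrightarrow> Gf (ss w) = H (ss w)"
        "\<And>y. \<bar>y - x\<bar> < \<delta> \<Longrightarrow> GU y = H (ss (of_real y)) \<and> cnj (GU y) = H' (ss (of_real y))"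
        using local_int[OF c H_def H'_def] by blast
      have zb: "z \<in> ball (of_real x) \<delta>" using d(1) zx by simp
      have "isCont (\<lambda>w. H (ss w)) z" by (rule holo_isCont[OF d(2) open_ball zb])
      then have "isCont (\<lambda>w. of_real rr * H (ss w)) z" by (rule continuous_mult[OF continuous_const])
      then have "continuous (at z within HU) (\<lambda>w. of_real rr * H (ss w))"
        by (rule continuous_at_imp_continuous_within)
      then show ?thesis
      proof (rule continuous_transform_within[where \<delta> = \<delta>])
        show "0 < \<delta>" by fact
        show "z \<in> HU" by fact
        fix w assume w: "w \<in> HU" "dist w z < \<delta>"
        then have wb: "w \<in> ball (of_real x) \<delta>" using zx by (simp add: dist_commute)
        show "of_real rr * H (ss w) = Gp w"
        proof (cases "Im w > 0")
          case True
          then show ?thesis using d(4)[OF wb] by (simp add: Gp_def mp_def)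
        next
          case False
          then have wr: "Im w = 0" using w by (simp add: HU_def)
          have "\<bar>Re w - x\<bar> < \<delta>"
            using abs_Re_le_cmod[of "w - z"] w(2) zx by (simp add: dist_norm)
          then have "GU (Re w) = H (ss w)" using d(5)[of "Re w"] wr by (simp add: of_real_Re)
          then show ?thesis using False by (simp add: Gp_def mpU_def)
        qed
      qed
    next
      case 3
      then show ?thesis using Gp_bdry[of z 1] zH zr by simp
    next
      case 4
      then show ?thesis using Gp_bdry[of z "-1"] zH zr by simp
    qed
  qed
qed

end

context setting
begin

lemma cnj_HL: "z \<in> HL \<Longrightarrow> cnj z \<in> HU"
  by (simp add: HL_def HU_def)

lemma Gm_eq: "z \<in> HL \<Longrightarrow> (if Im z < 0 then mp z else mpL (Re z)) = cnj (Gp (cnj z))"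
proof -
  assume z: "z \<in> HL"
  show ?thesis
  proof (cases "Im z < 0")
    case True
    then have zs: "z \<notin> sigma1 dB dR" by (intro Im_nz_nsigma) simp
    show ?thesis using True mp_cnj[OF zs] by (simp add: Gp_def)
  next
    case False
    then have "Im z = 0" using z by (simp add: HL_def)
    then show ?thesis using False by (simp add: Gp_def mpL_def)
  qed
qed

lemma Gm_cont: "continuous_on HL (\<lambda>z. if Im z < 0 then mp z else mpL (Re z))"
proof -
  have "continuous_on HL (\<lambda>z. Gp (cnj z))"
    by (rule continuous_on_compose2[OF Gp_cont continuous_on_cnj[OF continuous_on_id]]) (auto simp: cnj_HL)
  then have "continuous_on HL (\<lambda>z. cnj (Gp (cnj z)))" by (rule continuous_on_cnj)
  then show ?thesis by (rule continuous_on_cong[THEN iffD1, rotated 2]) (simp_all add: Gm_eq)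
qed

lemma Gpm_cont: "continuous_on HU (\<lambda>z. if Im z > 0 then mm z else mmU (Re z))"
proof -
  have "continuous_on HU (\<lambda>z. of_real D / Gp z)"
    by (rule continuous_on_divide[OF continuous_on_const Gp_cont]) (use Gp_nz in auto)
  then show ?thesis by (rule continuous_on_cong[THEN iffD1, rotated 2]) (simp_all add: Gp_def mm_def mmU_def)
qed

lemma Gmm_eq: "z \<in> HL \<Longrightarrow> (if Im z < 0 then mm z else mmL (Re z)) = of_real D / cnj (Gp (cnj z))"
proof -
  assume z: "z \<in> HL"
  show ?thesis
  proof (cases "Im z < 0")
    case True
    then show ?thesis using Gm_eq[OF z] by (simp add: mm_def)
  next
    case False
    then have "Im z = 0" using z by (simp add: HL_def)
    then show ?thesis using False by (simp add: Gp_def mmL_def mmU_def)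
  qed
qed

lemma Gmm_cont: "continuous_on HL (\<lambda>z. if Im z < 0 then mm z else mmL (Re z))"
proof -
  have "continuous_on HL (\<lambda>z. Gp (cnj z))"
    by (rule continuous_on_compose2[OF Gp_cont continuous_on_cnj[OF continuous_on_id]]) (auto simp: cnj_HL)
  then have "continuous_on HL (\<lambda>z. cnj (Gp (cnj z)))" by (rule continuous_on_cnj)
  then have "continuous_on HL (\<lambda>z. of_real D / cnj (Gp (cnj z)))"
    by (rule continuous_on_divide[OF continuous_on_const]) (use Gp_nz cnj_HL in auto)
  then show ?thesis by (rule continuous_on_cong[THEN iffD1, rotated 2]) (simp_all add: Gmm_eq)
qed

lemma jump_general:
  fixes F G :: "complex \<Rightarrow> complex"
  assumes Fc: "\<And>w. Im w > 0 \<Longrightarrow> F (cnj w) = cnj (F w)"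
    and GF: "\<And>w. Im w > 0 \<Longrightarrow> G w = F w"
    and Gc: "continuous_on HU G" and \<nu>: "Im \<nu> = 0"
  shows "((\<lambda>e::real. F (\<nu> + \<i> * of_real e) - F (\<nu> - \<i> * of_real e)) \<longlongrightarrow> 2 * \<i> * of_real (Im (G \<nu>))) (at_right 0)"
proof -
  let ?p = "\<lambda>e::real. \<nu> + \<i> * of_real e"
  have ev: "\<forall>\<^sub>F e in at_right (0::real). e > 0" by (rule eventually_at_right_less)
  have pl: "(?p \<longlongrightarrow> \<nu>) (at_right 0)"
  proof -
    have "(?p \<longlongrightarrow> \<nu> + \<i> * of_real 0) (at_right 0)" by (intro tendsto_intros)
    then show ?thesis by simp
  qed
  have "filterlim ?p (at \<nu> within HU) (at_right 0)"
    unfolding filterlim_at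
  proof
    show "\<forall>\<^sub>F e in at_right 0. ?p e \<in> HU \<and> ?p e \<noteq> \<nu>"
      using ev by eventually_elim (auto simp: HU_def \<nu> complex_eq_iff)
  qed (rule pl)
  moreover have "(G \<longlongrightarrow> G \<nu>) (at \<nu> within HU)"
    using Gc \<nu> by (simp add: continuous_on_def HU_def)
  ultimately have "((\<lambda>e. G (?p e)) \<longlongrightarrow> G \<nu>) (at_right 0)"
    by (rule filterlim_compose[rotated])
  then have lim: "((\<lambda>e. 2 * \<i> * of_real (Im (G (?p e)))) \<longlongrightarrow> 2 * \<i> * of_real (Im (G \<nu>))) (at_right 0)"
    by (intro tendsto_mult tendsto_const tendsto_of_real tendsto_Im)
  show ?thesis
  proof (rule Lim_transform_eventually[OF lim])
    show "\<forall>\<^sub>F e in at_right 0. 2 * \<i> * of_real (Im (G (?p e))) = F (?p e) - F (\<nu> - \<i> * of_real e)"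
      using ev
    proof eventually_elim
      case (elim e)
      have im: "Im (?p e) > 0" using elim \<nu> by simp
      have "\<nu> - \<i> * of_real e = cnj (?p e)" using \<nu> by (simp add: complex_eq_iff)
      then have "F (?p e) - F (\<nu> - \<i> * of_real e) = F (?p e) - cnj (F (?p e))" using Fc[OF im] by simp
      also have "\<dots> = 2 * \<i> * of_real (Im (F (?p e)))" by (simp add: complex_diff_cnj)
      finally show ?case using GF[OF im] by simp
    qed
  qed
qed

lemma jump_mp: "\<nu> \<in> sigma1 dB dR \<Longrightarrow>
  ((\<lambda>e::real. mp (\<nu> + \<i> * of_real e) - mp (\<nu> - \<i> * of_real e)) \<longlongrightarrow> 2 * \<i> * of_real (Im (mpU (Re \<nu>)))) (at_right 0)"
proof -
  assume "\<nu> \<in> sigma1 dB dR"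
  then have \<nu>: "Im \<nu> = 0" using sigma1_iff sigma1_real by blast
  have "((\<lambda>e::real. mp (\<nu> + \<i> * of_real e) - mp (\<nu> - \<i> * of_real e)) \<longlongrightarrow> 2 * \<i> * of_real (Im (Gp \<nu>))) (at_right 0)"
    by (rule jump_general[OF _ _ Gp_cont \<nu>]) (auto simp: mp_cnj Im_nz_nsigma Gp_def)
  then show ?thesis using \<nu> by (simp add: Gp_def)
qed

lemma jump_mm: "\<nu> \<in> sigma1 dB dR \<Longrightarrow>
  ((\<lambda>e::real. mm (\<nu> + \<i> * of_real e) - mm (\<nu> - \<i> * of_real e)) \<longlongrightarrow> 2 * \<i> * of_real (Im (mmU (Re \<nu>)))) (at_right 0)"
proof -
  assume "\<nu> \<in> sigma1 dB dR"
  then have \<nu>: "Im \<nu> = 0" using sigma1_iff sigma1_real by blast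
  have "((\<lambda>e::real. mm (\<nu> + \<i> * of_real e) - mm (\<nu> - \<i> * of_real e)) \<longlongrightarrow>
      2 * \<i> * of_real (Im ((\<lambda>z. if Im z > 0 then mm z else mmU (Re z)) \<nu>))) (at_right 0)"
    by (rule jump_general[OF _ _ Gpm_cont \<nu>]) (auto simp: mm_cnj Im_nz_nsigma)
  then show ?thesis using \<nu> by simp
qed

end

context setting
begin

lemma ra_all:
  assumes s2: "ss (of_real x) \<noteq> 2" "ss (of_real x) \<noteq> -2"
  shows "real_analytic_at mpU x \<and> real_analytic_at mpL x \<and> real_analytic_at mmU x \<and> real_analytic_at mmL x"
proof (cases "ss (of_real x) \<in> JJ")
  case False
  then have zs: "of_real x \<notin> sigma1 dB dR" by (simp add: nsigma_JJ)
  obtain e where e: "e > 0" "ball (of_real x) e \<subseteq> - sigma1 dB dR"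
    using open_nsigma zs open_contains_ball by blast
  have hp: "mp holomorphic_on ball (of_real x) e" using mp_holo e(2) by (rule holomorphic_on_subset)
  have hm: "mm holomorphic_on ball (of_real x) e" using mm_holo e(2) by (rule holomorphic_on_subset)
  have ys: "of_real y \<notin> sigma1 dB dR" if "\<bar>y - x\<bar> < e" for y
  proof -
    have "(of_real y :: complex) \<in> ball (of_real x) e"
      using that by (simp add: dist_real_def abs_minus_commute)
    then show ?thesis using e(2) by blast
  qed
  have U: "mpU y = mp (of_real y)" if "\<bar>y - x\<bar> < e" for y
    using ys[OF that] by (simp add: mpU_def GU_def mp_def nsigma_JJ)
  have L: "mpL y = mp (of_real y)" if "\<bar>y - x\<bar> < e" for y
    using mp_cnj[OF ys[OF that]] U[OF that] by (simp add: mpL_def)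
  have UU: "mmU y = mm (of_real y)" if "\<bar>y - x\<bar> < e" for y
    using U[OF that] by (simp add: mmU_def mm_def)
  have LL: "mmL y = mm (of_real y)" if "\<bar>y - x\<bar> < e" for y
    using mm_cnj[OF ys[OF that]] UU[OF that] by (simp add: mmL_def)
  show ?thesis
    using real_analytic_from_holo[OF e(1) hp U] real_analytic_from_holo[OF e(1) hp L]
      real_analytic_from_holo[OF e(1) hm UU] real_analytic_from_holo[OF e(1) hm LL] by blast
next
  case True
  define H where "H = (if sin (2 * sqrt x) > 0 then Gdn else Gup)"
  define H' where "H' = (if sin (2 * sqrt x) > 0 then Gup else Gdn)"
  obtain \<delta> where d: "\<delta> > 0" "(\<lambda>w. H (ss w)) holomorphic_on ball (of_real x) \<delta>"
    "(\<lambda>w. H' (ss w)) holomorphic_on ball (of_real x) \<delta>"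
    "\<And>w. w \<in> ball (of_real x) \<delta> \<Longrightarrow> Im w > 0 \<Longrightarrow> Gf (ss w) = H (ss w)"
    "\<And>y. \<bar>y - x\<bar> < \<delta> \<Longrightarrow> GU y = H (ss (of_real y)) \<and> cnj (GU y) = H' (ss (of_real y))"
    using local_int[OF True s2 H_def H'_def] by blast
  have Hnz: "H s \<noteq> 0" "H' s \<noteq> 0" for s
    unfolding H_def H'_def using root_nz[OF Gup_root] root_nz[OF Gdn_root] by auto
  have h1: "(\<lambda>w. of_real rr * H (ss w)) holomorphic_on ball (of_real x) \<delta>"
    by (rule holomorphic_on_mult[OF holomorphic_on_const d(2)])
  have h2: "(\<lambda>w. of_real rr * H' (ss w)) holomorphic_on ball (of_real x) \<delta>"
    by (rule holomorphic_on_mult[OF holomorphic_on_const d(3)])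
  have h3: "(\<lambda>w. of_real D / (of_real rr * H (ss w))) holomorphic_on ball (of_real x) \<delta>"
    by (rule holomorphic_on_divide[OF holomorphic_on_const h1]) (use rr_pos Hnz in auto)
  have h4: "(\<lambda>w. of_real D / (of_real rr * H' (ss w))) holomorphic_on ball (of_real x) \<delta>"
    by (rule holomorphic_on_divide[OF holomorphic_on_const h2]) (use rr_pos Hnz in auto)
  have U: "mpU y = of_real rr * H (ss (of_real y))" if "\<bar>y - x\<bar> < \<delta>" for y
    using d(5)[OF that] by (simp add: mpU_def)
  have L: "mpL y = of_real rr * H' (ss (of_real y))" if "\<bar>y - x\<bar> < \<delta>" for y
  proof -
    have c: "cnj (GU y) = H' (ss (of_real y))" using d(5)[OF that] by blast
    have "mpL y = of_real rr * cnj (GU y)" by (simp add: mpL_def mpU_def)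
    then show ?thesis using c by simp
  qed
  have UU: "mmU y = of_real D / (of_real rr * H (ss (of_real y)))" if "\<bar>y - x\<bar> < \<delta>" for y
    using U[OF that] by (simp add: mmU_def)
  have LL: "mmL y = of_real D / (of_real rr * H' (ss (of_real y)))" if "\<bar>y - x\<bar> < \<delta>" for y
    using L[OF that] by (simp add: mmL_def mmU_def mpL_def)
  show ?thesis
    using real_analytic_from_holo[OF d(1) h1 U] real_analytic_from_holo[OF d(1) h2 L]
      real_analytic_from_holo[OF d(1) h3 UU] real_analytic_from_holo[OF d(1) h4 LL] by blast
qed

lemma trace_eq: "trace (T0 dB dR z) = tt z"
  by (simp add: trace_T0[OF dB1 dR1] tt_def)

lemma four_D: "4 / (of_nat (dR * dB) :: complex) = 4 * of_real D"
  by (simp add: DD_def divide_inverse)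

lemma tt_ss: "tt z = of_real rr * ss z"
  using rr_pos by (simp add: ss_def)

lemma tt_sq_iff: "(tt z)^2 = 4 * of_real D \<longleftrightarrow> ss z = 2 \<or> ss z = -2"
proof -
  have "(tt z)^2 = of_real D * (ss z)^2"
    using rr_sq by (simp add: tt_ss power_mult_distrib flip: of_real_power)
  then have "(tt z)^2 = 4 * of_real D \<longleftrightarrow> (ss z)^2 = 4" using D_pos by auto
  also have "\<dots> \<longleftrightarrow> ss z = 2 \<or> ss z = -2"
    using power2_eq_iff[of "ss z" 2] by simp
  finally show ?thesis .
qed

lemma discrete: "\<exists>e>0. \<forall>y. y \<noteq> x \<and> \<bar>y - x\<bar> < e \<longrightarrow> (trace (T0 dB dR (of_real y)))\<^sup>2 \<noteq> 4 / of_nat (dR * dB)"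
proof -
  define F where "F z = (tt z)^2 - 4 * of_real D" for z
  have Fh: "F holomorphic_on UNIV"
    unfolding F_def[abs_def] tt_def by (intro holomorphic_intros EE_holo)
  have "F (-1) \<noteq> 0"
  proof -
    have "EE (of_real (-1)) = of_real (cosh 2)" using EE_neg[of "-1"] by simp
    then have t: "tt (-1) = of_real (A + B * cosh 2)" by (simp add: tt_def)
    have "cosh (2::real) > 1" using cosh_real_ge_1[of 2] cosh_real_one_iff[of 2] by linarith
    then have "B * cosh 2 > B * 1" using B_pos by (intro mult_strict_left_mono) auto
    then have "A + B * cosh 2 > 2 * rr" using AB_sum ineq1 by linarith
    then have "(A + B * cosh 2)^2 > (2 * rr)^2" using rr_pos by (intro power_strict_mono) auto
    then have "(A + B * cosh 2)^2 \<noteq> 4 * D" using rr_sq by (simp add: power_mult_distrib)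
    then have "(of_real (A + B * cosh 2) :: complex)^2 \<noteq> of_real (4 * D)"
      by (metis of_real_eq_iff of_real_power)
    then show ?thesis by (simp add: F_def t)
  qed
  have ev: "\<forall>\<^sub>F w in at (of_real x). F w \<noteq> 0"
  proof (cases "F (of_real x) = 0")
    case True
    obtain r where r: "0 < r" "\<And>z. z \<in> ball (of_real x) r - {of_real x} \<Longrightarrow> F z \<noteq> 0"
      using isolated_zeros[OF Fh open_UNIV connected_UNIV _ True _ \<open>F (-1) \<noteq> 0\<close>] by auto
    show ?thesis unfolding eventually_at
      using r by (intro exI[of _ r]) (auto simp: dist_commute)
  next
    case False
    have "isCont F (of_real x)" using holo_isCont[OF Fh open_UNIV] by simp
    then obtain \<epsilon> where "\<epsilon> > 0" "\<And>y. dist (of_real x) y < \<epsilon> \<Longrightarrow> F y \<noteq> 0"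
      using continuous_at_avoid[of "of_real x" F 0] False by auto
    then show ?thesis unfolding eventually_at
      by (intro exI[of _ \<epsilon>]) (auto simp: dist_commute)
  qed
  then obtain d where d: "d > 0" "\<And>w. w \<noteq> of_real x \<Longrightarrow> dist w (of_real x) < d \<Longrightarrow> F w \<noteq> 0"
    unfolding eventually_at by auto
  show ?thesis
  proof (intro exI[of _ d] conjI allI impI)
    show "d > 0" by fact
    fix y assume y: "y \<noteq> x \<and> \<bar>y - x\<bar> < d"
    then have "F (of_real y) \<noteq> 0" using d(2)[of "of_real y"] by (simp add: dist_real_def)
    then show "(trace (T0 dB dR (of_real y)))\<^sup>2 \<noteq> 4 / of_nat (dR * dB)"
      unfolding trace_eq four_D by (simp add: F_def)
  qed
qed

end

context setting
begin

definition "Psi t = (A * t + B * (1 + t^2) / 2) / 2 * (1 + sqrt (1 - 4 * D * t^2 / (A * t + B * (1 + t^2) / 2)^2))"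

lemma mp_neg:
  assumes x: "x < 0"
  shows "of_real (exp (- 2 * \<bar>Im (csqrt (of_real x))\<bar>)) * mp (of_real x) = of_real (Psi (exp (- 2 * sqrt (- x))))"
proof -
  define y where "y = sqrt (- x)"
  have y0: "y > 0" using x by (simp add: y_def)
  define t where "t = exp (- 2 * y)"
  have t0: "t > 0" by (simp add: t_def)
  have c1: "csqrt (of_real x) = \<i> * of_real y" using x by (simp add: y_def)
  have e2: "exp (2 * y) = 1 / t"
  proof -
    have "exp (- (2 * y)) = inverse (exp (2 * y))" by (rule exp_minus)
    then show ?thesis by (simp add: t_def divide_inverse)
  qed
  have ch: "cosh (2 * y) = (1 / t + t) / 2" by (simp add: cosh_def e2 t_def)
  define T where "T = A + B * ((1 / t + t) / 2)"
  define U where "U = A * t + B * (1 + t^2) / 2"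
  have UT: "U = t * T" using t0 by (simp add: U_def T_def field_simps power2_eq_square)
  have "cosh (2 * y) > 1" using cosh_real_ge_1[of "2 * y"] cosh_real_one_iff[of "2 * y"] y0 by linarith
  then have "B * cosh (2 * y) > B * 1" using B_pos by (intro mult_strict_left_mono) auto
  moreover have "T = A + B * cosh (2 * y)" by (simp add: T_def ch)
  ultimately have T2: "T > 2 * rr" using AB_sum ineq1 by linarith
  define \<sigma> where "\<sigma> = T / rr"
  have \<sigma>2: "\<sigma> > 2" using T2 rr_pos by (simp add: \<sigma>_def field_simps)
  have ssx: "ss (of_real x) = of_real \<sigma>"
  proof -
    have "EE (of_real x) = of_real (cosh (2 * y))" using EE_neg[of x] x by (simp add: y_def)
    then show ?thesis by (simp add: ss_def tt_def \<sigma>_def T_def ch)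
  qed
  have q: "1 - 4 / \<sigma>^2 > 0"
  proof -
    have s4: "\<sigma>^2 > 2^2" using \<sigma>2 by (intro power_strict_mono) auto
    then have "4 / \<sigma>^2 < 1" by (simp add: divide_less_eq)
    then show ?thesis by simp
  qed
  have Gf\<sigma>: "Gf (of_real \<sigma>) = of_real (\<sigma> / 2 * (1 + sqrt (1 - 4 / \<sigma>^2)))"
  proof -
    have "csqrt (1 - 4 / (of_real \<sigma>)^2) = csqrt (of_real (1 - 4 / \<sigma>^2))" by simp
    also have "\<dots> = of_real (sqrt (1 - 4 / \<sigma>^2))" using q by (intro csqrt_of_real) simp
    finally show ?thesis by (simp add: Gf_def)
  qed
  have mpx: "mp (of_real x) = of_real (rr * (\<sigma> / 2 * (1 + sqrt (1 - 4 / \<sigma>^2))))"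
    by (simp add: mp_def ssx Gf\<sigma>)
  have fr: "4 / \<sigma>^2 = 4 * D * t^2 / U^2"
    using rr_pos t0 T2 rr_sq by (simp add: \<sigma>_def UT field_simps power2_eq_square)
  define Q where "Q = sqrt (1 - 4 / \<sigma>^2)"
  have Ps: "Psi t = U / 2 * (1 + Q)" unfolding Psi_def Q_def fr U_def by simp
  have rs: "rr * \<sigma> = T" using rr_pos by (simp add: \<sigma>_def)
  have "exp (- 2 * y) * (rr * (\<sigma> / 2 * (1 + sqrt (1 - 4 / \<sigma>^2)))) = t * (rr * \<sigma>) / 2 * (1 + Q)"
    by (simp add: t_def Q_def)
  also have "\<dots> = Psi t" by (simp add: rs Ps UT)
  finally have P: "exp (- 2 * y) * (rr * (\<sigma> / 2 * (1 + sqrt (1 - 4 / \<sigma>^2)))) = Psi t" .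
  have im: "\<bar>Im (csqrt (of_real x))\<bar> = y" using c1 y0 by simp
  have "of_real (exp (- 2 * \<bar>Im (csqrt (of_real x))\<bar>)) * mp (of_real x)
      = of_real (exp (- 2 * y) * (rr * (\<sigma> / 2 * (1 + sqrt (1 - 4 / \<sigma>^2)))))"
    by (simp only: im mpx of_real_mult)
  also have "\<dots> = of_real (Psi t)" by (simp only: P)
  finally show ?thesis by (simp only: t_def y_def)
qed

lemma Psi_lim: "((\<lambda>x. Psi (exp (- 2 * sqrt (- x)))) \<longlongrightarrow> B / 2) at_bot"
proof -
  have e: "((\<lambda>x::real. exp (- 2 * sqrt (- x))) \<longlongrightarrow> 0) at_bot" by real_asymp
  have "((\<lambda>x. Psi (exp (- 2 * sqrt (- x)))) \<longlongrightarrow> Psi 0) at_bot"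
    unfolding Psi_def using B_pos by (intro tendsto_intros e) auto
  moreover have "Psi 0 = B / 2" by (simp add: Psi_def)
  ultimately show ?thesis by simp
qed

lemma ev_neg: "\<forall>\<^sub>F x in at_bot. (x::real) < 0"
  unfolding eventually_at_bot_dense by auto

lemma lim_mp: "((\<lambda>x::real. of_real (exp (- 2 * \<bar>Im (csqrt (of_real x))\<bar>)) * mp (of_real x)) \<longlongrightarrow> of_real (B / 2)) at_bot"
proof (rule Lim_transform_eventually)
  show "((\<lambda>x. of_real (Psi (exp (- 2 * sqrt (- x)))) :: complex) \<longlongrightarrow> of_real (B / 2)) at_bot"
    by (rule tendsto_of_real[OF Psi_lim])
  show "\<forall>\<^sub>F x in at_bot. (of_real (Psi (exp (- 2 * sqrt (- x)))) :: complex) = of_real (exp (- 2 * \<bar>Im (csqrt (of_real x))\<bar>)) * mp (of_real x)"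
    using ev_neg by eventually_elim (rule mp_neg[symmetric])
qed

lemma lim_mm: "((\<lambda>x::real. of_real (exp (2 * \<bar>Im (csqrt (of_real x))\<bar>)) * mm (of_real x)) \<longlongrightarrow> of_real (D / (B / 2))) at_bot"
proof -
  have "((\<lambda>x. of_real D / (of_real (exp (- 2 * \<bar>Im (csqrt (of_real x))\<bar>)) * mp (of_real x))) \<longlongrightarrow> (of_real D / of_real (B / 2) :: complex)) at_bot"
    using B_pos by (intro tendsto_divide tendsto_const lim_mp) simp
  then have "((\<lambda>x::real. of_real (exp (2 * \<bar>Im (csqrt (of_real x))\<bar>)) * mm (of_real x)) \<longlongrightarrow> (of_real D / of_real (B / 2) :: complex)) at_bot"
  proof (rule Lim_transform_eventually)
    show "\<forall>\<^sub>F x in at_bot. of_real D / (of_real (exp (- 2 * \<bar>Im (csqrt (of_real x))\<bar>)) * mp (of_real x)) = of_real (exp (2 * \<bar>Im (csqrt (of_real x))\<bar>)) * mm (of_real x)"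
      by (intro always_eventually allI) (simp add: mm_def exp_minus field_simps)
  qed
  then show ?thesis by simp
qed

end

theorem theorem4p3:
  fixes dB dR :: nat
  assumes "dB \<ge> 1" and "dR \<ge> 1"
  shows "sigma1 dB dR \<subseteq> {z. Im z = 0 \<and> Re z \<ge> 0} \<and>
   (\<exists>(mp :: complex \<Rightarrow> complex) (mm :: complex \<Rightarrow> complex)
      (mpU :: real \<Rightarrow> complex) (mpL :: real \<Rightarrow> complex)
      (mmU :: real \<Rightarrow> complex) (mmL :: real \<Rightarrow> complex).
     mp analytic_on (- sigma1 dB dR) \<and> mm analytic_on (- sigma1 dB dR) \<and>
     (\<forall>l. l \<notin> sigma1 dB dR \<longrightarrow>
        is_eigenvalue (T0 dB dR l) (mp l) \<and> is_eigenvalue (T0 dB dR l) (mm l) \<and>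
        cmod (mp l) > 1 / sqrt (real (dR * dB)) \<and>
        cmod (mm l) < 1 / sqrt (real (dR * dB))) \<and>
     ((\<lambda>x::real. of_real (exp (- 2 * \<bar>Im (csqrt (of_real x))\<bar>)) * mp (of_real x))
        \<longlongrightarrow> of_real ((real dR + 1) / (2 * real dR) * ((real dB + 1) / (2 * real dB)))) at_bot \<and>
     ((\<lambda>x::real. of_real (exp (2 * \<bar>Im (csqrt (of_real x))\<bar>)) * mm (of_real x))
        \<longlongrightarrow> of_real (2 / (real dR + 1) * (2 / (real dB + 1)))) at_bot \<and>
     continuous_on {z. Im z \<ge> 0} (\<lambda>z. if Im z > 0 then mp z else mpU (Re z)) \<and>
     continuous_on {z. Im z \<le> 0} (\<lambda>z. if Im z < 0 then mp z else mpL (Re z)) \<and>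
     continuous_on {z. Im z \<ge> 0} (\<lambda>z. if Im z > 0 then mm z else mmU (Re z)) \<and>
     continuous_on {z. Im z \<le> 0} (\<lambda>z. if Im z < 0 then mm z else mmL (Re z)) \<and>
     (\<forall>x. \<exists>e>0. \<forall>y. y \<noteq> x \<and> \<bar>y - x\<bar> < e \<longrightarrow>
        (trace (T0 dB dR (of_real y)))\<^sup>2 \<noteq> 4 / of_nat (dR * dB)) \<and>
     (\<forall>x. (trace (T0 dB dR (of_real x)))\<^sup>2 \<noteq> 4 / of_nat (dR * dB) \<longrightarrow>
        real_analytic_at mpU x \<and> real_analytic_at mpL x \<and>
        real_analytic_at mmU x \<and> real_analytic_at mmL x) \<and>
     (\<forall>\<nu>\<in>sigma1 dB dR.
        ((\<lambda>e::real. mp (\<nu> + \<i> * of_real e) - mp (\<nu> - \<i> * of_real e))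
           \<longlongrightarrow> 2 * \<i> * of_real (Im (mpU (Re \<nu>)))) (at_right 0) \<and>
        ((\<lambda>e::real. mm (\<nu> + \<i> * of_real e) - mm (\<nu> - \<i> * of_real e))
           \<longlongrightarrow> 2 * \<i> * of_real (Im (mmU (Re \<nu>)))) (at_right 0)))"
proof -
  interpret S: setting dB dR using assms by unfold_locales
  have Bh: "S.B / 2 = (real dR + 1) / (2 * real dR) * ((real dB + 1) / (2 * real dB))"
    using assms by (simp add: BB_def DD_def aa_def field_simps)
  have DB: "S.D / (S.B / 2) = 2 / (real dR + 1) * (2 / (real dB + 1))"
  proof -
    have p: "real dR > 0" "real dB > 0" "real dR + 1 > 0" "real dB + 1 > 0" using assms by auto
    have "S.D / (S.B / 2) = (1 / (real dR * real dB)) / ((real dR + 1) / (2 * real dR) * ((real dB + 1) / (2 * real dB)))"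
      by (simp only: Bh) (simp add: DD_def)
    also have "\<dots> = 2 / (real dR + 1) * (2 / (real dB + 1))"
      using p by (simp add: field_simps)
    finally show ?thesis .
  qed
  have part1: "sigma1 dB dR \<subseteq> {z. Im z = 0 \<and> Re z \<ge> 0}"
    using S.sigma1_iff S.sigma1_real by blast
  have ra: "real_analytic_at S.mpU x \<and> real_analytic_at S.mpL x \<and> real_analytic_at S.mmU x \<and> real_analytic_at S.mmL x"
    if "(trace (T0 dB dR (of_real x)))\<^sup>2 \<noteq> 4 / of_nat (dR * dB)" for x
  proof -
    have "\<not> (S.ss (of_real x) = 2 \<or> S.ss (of_real x) = -2)"
      using that unfolding S.trace_eq S.four_D S.tt_sq_iff by simp
    then show ?thesis using S.ra_all by blast
  qed
  show ?thesis
  proof (rule conjI[OF part1], rule exI[of _ S.mp], rule exI[of _ S.mm], rule exI[of _ S.mpU],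
      rule exI[of _ S.mpL], rule exI[of _ S.mmU], rule exI[of _ S.mmL], intro conjI)
    show "S.mp analytic_on (- sigma1 dB dR)" using S.mp_holo S.open_nsigma by (simp add: analytic_on_open)
    show "S.mm analytic_on (- sigma1 dB dR)" using S.mm_holo S.open_nsigma by (simp add: analytic_on_open)
    show "\<forall>l. l \<notin> sigma1 dB dR \<longrightarrow>
        is_eigenvalue (T0 dB dR l) (S.mp l) \<and> is_eigenvalue (T0 dB dR l) (S.mm l) \<and>
        cmod (S.mp l) > 1 / sqrt (real (dR * dB)) \<and>
        cmod (S.mm l) < 1 / sqrt (real (dR * dB))"
      using S.mp_mm_props unfolding S.rr_eq by blast
    show "((\<lambda>x::real. of_real (exp (- 2 * \<bar>Im (csqrt (of_real x))\<bar>)) * S.mp (of_real x))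
        \<longlongrightarrow> of_real ((real dR + 1) / (2 * real dR) * ((real dB + 1) / (2 * real dB)))) at_bot"
      using S.lim_mp unfolding Bh .
    show "((\<lambda>x::real. of_real (exp (2 * \<bar>Im (csqrt (of_real x))\<bar>)) * S.mm (of_real x))
        \<longlongrightarrow> of_real (2 / (real dR + 1) * (2 / (real dB + 1)))) at_bot"
      using S.lim_mm unfolding DB .
    show "continuous_on {z. Im z \<ge> 0} (\<lambda>z. if Im z > 0 then S.mp z else S.mpU (Re z))"
      using S.Gp_cont unfolding S.Gp_def[abs_def] S.HU_def .
    show "continuous_on {z. Im z \<le> 0} (\<lambda>z. if Im z < 0 then S.mp z else S.mpL (Re z))"
      using S.Gm_cont unfolding S.HL_def .
    show "continuous_on {z. Im z \<ge> 0} (\<lambda>z. if Im z > 0 then S.mm z else S.mmU (Re z))"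
      using S.Gpm_cont unfolding S.HU_def .
    show "continuous_on {z. Im z \<le> 0} (\<lambda>z. if Im z < 0 then S.mm z else S.mmL (Re z))"
      using S.Gmm_cont unfolding S.HL_def .
    show "\<forall>x. \<exists>e>0. \<forall>y. y \<noteq> x \<and> \<bar>y - x\<bar> < e \<longrightarrow>
        (trace (T0 dB dR (of_real y)))\<^sup>2 \<noteq> 4 / of_nat (dR * dB)"
      using S.discrete by blast
    show "\<forall>x. (trace (T0 dB dR (of_real x)))\<^sup>2 \<noteq> 4 / of_nat (dR * dB) \<longrightarrow>
        real_analytic_at S.mpU x \<and> real_analytic_at S.mpL x \<and>
        real_analytic_at S.mmU x \<and> real_analytic_at S.mmL x"
      using ra by blast
    show "\<forall>\<nu>\<in>sigma1 dB dR.
        ((\<lambda>e::real. S.mp (\<nu> + \<i> * of_real e) - S.mp (\<nu> - \<i> * of_real e))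
           \<longlongrightarrow> 2 * \<i> * of_real (Im (S.mpU (Re \<nu>)))) (at_right 0) \<and>
        ((\<lambda>e::real. S.mm (\<nu> + \<i> * of_real e) - S.mm (\<nu> - \<i> * of_real e))
           \<longlongrightarrow> 2 * \<i> * of_real (Im (S.mmU (Re \<nu>)))) (at_right 0)"
      using S.jump_mp S.jump_mm by blast
  qed
qed

end
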